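(* $I^*$ is a non-trivial Borel $\sigma$-ideal on $\mathbf{Tr}$ which does not satisfy ccc but satisfies the $\omega_2$-chain condition: there is no family of $\omega_2$ Borel sets not in $I^*$ whose pairwise intersections all belong to $I^*$.
   Context: $\mathbf{Tr}$ is the set of all subtrees of $\omega^{<\omega}$ (subsets closed under initial segments), a closed subspace of $2^{(\omega^{<\omega})}$ with the product topology. $\mathbf{Trw}\subseteq\mathbf{Tr}$ is the set of well-founded trees. For $T\in\mathbf{Trw}$, $h_T:T\to\omega_1$ is the canonical rank function: $h_T(\nu)=\sup\{h_T(\nu')+1:\nu'\in T \text{ an immediate successor of }\nu\}$. For $\alpha<\omega_1$, $A_\alpha=\{T\in\mathbf{Trw}: h_T(\langle\rangle)=\alpha\}$. For $n\in\omega$ let $n^{\le n}$ be the set of sequences of length $\le n$ with values $<n$. $\tau_\alpha$ is the topology on $A_\alpha$ with basis the sets $U(n,T)=\{T'\in A_\alpha: T'\cap n^{\le n}=T\cap n^{\le n} \text{ and } h_{T'}\restriction (T\cap n^{\le n})=h_T\restriction(T\cap n^{\le n})\}$ for $T\in A_\alpha$, $n\in\omega$. $I^*$ is the family of all subsets of Borel sets $B\subseteq\mathbf{Tr}$ such that $B\cap A_\alpha$ is $\tau_\alpha$-meager for every $0<\alpha<\omega_1$. An ideal satisfies ccc if every family of pairwise disjoint Borel sets not in the ideal is countable. *)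

theory Defs
  imports "HOL-Analysis.Analysis"
begin

text \<open>Sequences in omega^{<omega} are lists of naturals; a tree is a set of such
lists closed under initial segments.\<close>

definition Tr :: "nat list set set" where
  "Tr = {T. \<forall>s\<in>T. \<forall>n. take n s \<in> T}"

definition Trw :: "nat list set set" where
  "Trw = {T \<in> Tr. \<not> (\<exists>x::nat \<Rightarrow> nat. \<forall>n. map x [0..<n] \<in> T)}"

text \<open>omega_1 is represented by the well-order W = cardSuc natLeq, a cardinal order
of cardinality aleph_1, hence of order type omega_1: the countable ordinals are
the elements of Field W, ordered by W.\<close>

abbreviation W :: "(nat set \<times> nat set) set" where
  "W \<equiv> cardSuc natLeq"

definition ord_zero :: "nat set" where
  "ord_zero = wo_rel.minim W (Field W)"

definition ord_succ :: "nat set \<Rightarrow> nat set" where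
  "ord_succ a = wo_rel.suc W {a}"

definition ord_sup :: "nat set set \<Rightarrow> nat set" where
  "ord_sup A = wo_rel.supr W A"

definition rank_fun :: "nat list set \<Rightarrow> nat list \<Rightarrow> nat set" where
  "rank_fun T = (THE f. (\<forall>\<nu>\<in>T. f \<nu> \<in> Field W \<and>
       f \<nu> = ord_sup {ord_succ (f (\<nu> @ [k])) | k. \<nu> @ [k] \<in> T})
     \<and> (\<forall>\<nu>. \<nu> \<notin> T \<longrightarrow> f \<nu> = undefined))"

definition A :: "nat set \<Rightarrow> nat list set set" where
  "A \<alpha> = {T \<in> Trw. [] \<in> T \<and> rank_fun T [] = \<alpha>}"

definition box :: "nat \<Rightarrow> nat list set" where
  "box n = {s. length s \<le> n \<and> (\<forall>x\<in>set s. x < n)}"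

definition U :: "nat set \<Rightarrow> nat \<Rightarrow> nat list set \<Rightarrow> nat list set set" where
  "U \<alpha> n T = {T' \<in> A \<alpha>. T' \<inter> box n = T \<inter> box n \<and>
       (\<forall>\<nu>\<in>T \<inter> box n. rank_fun T' \<nu> = rank_fun T \<nu>)}"

definition tau :: "nat set \<Rightarrow> nat list set topology" where
  "tau \<alpha> = topology_generated_by {U \<alpha> n T | n T. T \<in> A \<alpha>}"

definition nowhere_dense_in :: "'a topology \<Rightarrow> 'a set \<Rightarrow> bool" where
  "nowhere_dense_in X S \<longleftrightarrow> S \<subseteq> topspace X \<and> X interior_of (X closure_of S) = {}"

definition meager_in :: "'a topology \<Rightarrow> 'a set \<Rightarrow> bool" where
  "meager_in X S \<longleftrightarrow> (\<exists>F. countable F \<and> (\<forall>N\<in>F. nowhere_dense_in X N) \<and> S \<subseteq> \<Union>F)"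

text \<open>Tr is a closed subspace of 2^(omega^{<omega}) (identified with
nat list => bool, product of discrete spaces). Borel subsets of Tr are those
whose image under the characteristic-function map is Borel.\<close>

definition Borel_Tr :: "nat list set set \<Rightarrow> bool" where
  "Borel_Tr B \<longleftrightarrow> B \<subseteq> Tr \<and>
     (\<lambda>T s. s \<in> T) ` B \<in> sets (borel :: (nat list \<Rightarrow> bool) measure)"

definition Istar :: "nat list set set set" where
  "Istar = {S. \<exists>B. Borel_Tr B \<and> S \<subseteq> B \<and>
      (\<forall>\<alpha>\<in>Field W. \<alpha> \<noteq> ord_zero \<longrightarrow> meager_in (tau \<alpha>) (B \<inter> A \<alpha>))}"

end

theory Submission
  imports Defs "HOL-Library.Countable_Set_Type"
begin

unbundle cardinal_syntax


lemma W_card: "Card_order W"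
  by (simp add: cardSuc_Card_order natLeq_Card_order)

lemma W_wo: "wo_rel W"
  using W_card unfolding wo_rel_def card_order_on_def by blast

lemma W_infinite: "\<not> finite (Field W)"
  using cardSuc_finite[OF natLeq_Card_order] by (simp add: Field_natLeq)

lemma W_uncountable: "\<not> countable (Field W)"
proof
  assume "countable (Field W)"
  then have "|Field W| \<le>o natLeq" by (simp add: countable_card_le_natLeq)
  moreover have "|Field W| =o W" using W_card card_of_Field_ordIso by blast
  ultimately have "W \<le>o natLeq" by (meson ordIso_ordLeq_trans ordIso_symmetric)
  moreover have "natLeq <o W" by (simp add: cardSuc_greater natLeq_Card_order)
  ultimately show False using not_ordLess_ordLeq by metis
qed

lemma countable_underS: "countable (underS W a)"
proof (cases "a \<in> Field W")
  case True
  have 1: "|underS W a| <o W" using card_of_underS[OF W_card True] .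
  have "|underS W a| \<le>o natLeq"
    using 1 cardSuc_ordLeq_ordLess[OF natLeq_Card_order card_of_Card_order[of "underS W a"]] by simp
  then show ?thesis by (simp add: countable_card_le_natLeq)
next
  case False
  then have "underS W a = {}" unfolding underS_def Field_def by auto
  then show ?thesis by simp
qed

lemma W_refl: "a \<in> Field W \<Longrightarrow> (a,a) \<in> W"
  using wo_rel.REFL[OF W_wo] by (auto simp: refl_on_def)

lemma W_trans: "(a,b) \<in> W \<Longrightarrow> (b,c) \<in> W \<Longrightarrow> (a,c) \<in> W"
  using wo_rel.TRANS[OF W_wo] by (auto simp: trans_def)

lemma W_antisym: "(a,b) \<in> W \<Longrightarrow> (b,a) \<in> W \<Longrightarrow> a = b"
  using wo_rel.ANTISYM[OF W_wo] by (auto simp: antisym_def)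

lemma W_total: "a \<in> Field W \<Longrightarrow> b \<in> Field W \<Longrightarrow> (a,b) \<in> W \<or> (b,a) \<in> W"
  using wo_rel.TOTALS[OF W_wo] by blast

lemma W_field1: "(a,b) \<in> W \<Longrightarrow> a \<in> Field W"
  by (auto simp: Field_def)
lemma W_field2: "(a,b) \<in> W \<Longrightarrow> b \<in> Field W"
  by (auto simp: Field_def)

lemma W_bounded:
  assumes "countable B" "B \<subseteq> Field W"
  shows "\<exists>i\<in>Field W. \<forall>b\<in>B. (b,i) \<in> W"
proof -
  have ch: "relChain W (under W)"
    unfolding relChain_def under_def using W_trans by blast
  have sub: "B \<subseteq> (\<Union>i\<in>Field W. under W i)"
    using assms(2) W_refl unfolding under_def by blast
  have cd: "|B| \<le>o natLeq" using assms(1) by (simp add: countable_card_le_natLeq)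
  have inf: "\<not> finite (Field natLeq)" by (simp add: Field_natLeq)
  have "\<exists>i\<in>Field W. B \<subseteq> under W i"
    by (rule cardSuc_UNION[OF natLeq_Card_order inf ch sub cd])
  then show ?thesis unfolding under_def by blast
qed

lemma W_nomax: "a \<in> Field W \<Longrightarrow> \<exists>b. (a,b) \<in> W \<and> a \<noteq> b"
proof -
  assume a: "a \<in> Field W"
  have "Field W \<noteq> under W a" using Card_order_infinite_not_under[OF W_card W_infinite] by blast
  moreover have "under W a \<subseteq> Field W" unfolding under_def Field_def by auto
  ultimately obtain b where "b \<in> Field W" "(b,a) \<notin> W" unfolding under_def by blast
  then show ?thesis using W_total[OF a] W_refl by blast
qed

lemma ord_succ_props:
  assumes "a \<in> Field W"
  shows "ord_succ a \<in> Field W" "(a, ord_succ a) \<in> W" "a \<noteq> ord_succ a"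
    and "\<And>b. (a,b) \<in> W \<Longrightarrow> a \<noteq> b \<Longrightarrow> (ord_succ a, b) \<in> W"
proof -
  obtain b where b: "(a,b) \<in> W" "a \<noteq> b" using W_nomax[OF assms] by blast
  have ne: "AboveS W {a} \<noteq> {}" using b W_field2 unfolding AboveS_def by blast
  have sub: "{a} \<subseteq> Field W" using assms by blast
  show "ord_succ a \<in> Field W" unfolding ord_succ_def using wo_rel.suc_inField[OF W_wo sub ne] .
  show "(a, ord_succ a) \<in> W" "a \<noteq> ord_succ a" unfolding ord_succ_def
    using wo_rel.suc_greater[OF W_wo sub ne] by auto
  show "\<And>b. (a,b) \<in> W \<Longrightarrow> a \<noteq> b \<Longrightarrow> (ord_succ a, b) \<in> W"
  proof -
    fix c assume "(a,c) \<in> W" "a \<noteq> c"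
    then have "c \<in> AboveS W {a}" unfolding AboveS_def using W_field2 by blast
    then show "(ord_succ a, c) \<in> W" unfolding ord_succ_def by (rule wo_rel.suc_least_AboveS[OF W_wo])
  qed
qed

lemma ord_sup_props:
  assumes "countable B" "B \<subseteq> Field W"
  shows "ord_sup B \<in> Field W" "\<And>b. b \<in> B \<Longrightarrow> (b, ord_sup B) \<in> W"
    and "\<And>c. c \<in> Field W \<Longrightarrow> (\<forall>b\<in>B. (b,c) \<in> W) \<Longrightarrow> (ord_sup B, c) \<in> W"
proof -
  have ne: "Above W B \<noteq> {}" using W_bounded[OF assms] unfolding Above_def by blast
  have sub: "Above W B \<subseteq> Field W" unfolding Above_def by blast
  have mi: "ord_sup B \<in> Above W B" unfolding ord_sup_def wo_rel.supr_def[OF W_wo]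
    using wo_rel.minim_in[OF W_wo sub ne] .
  then show "ord_sup B \<in> Field W" "\<And>b. b \<in> B \<Longrightarrow> (b, ord_sup B) \<in> W"
    unfolding Above_def by auto
  show "\<And>c. c \<in> Field W \<Longrightarrow> (\<forall>b\<in>B. (b,c) \<in> W) \<Longrightarrow> (ord_sup B, c) \<in> W"
  proof -
    fix c assume "c \<in> Field W" "\<forall>b\<in>B. (b,c) \<in> W"
    then have "c \<in> Above W B" unfolding Above_def by blast
    then show "(ord_sup B, c) \<in> W" unfolding ord_sup_def wo_rel.supr_def[OF W_wo]
      using wo_rel.minim_least[OF W_wo sub] by blast
  qed
qed

lemma ord_sup_eqI:
  assumes "countable B" "B \<subseteq> Field W" "c \<in> Field W" "\<forall>b\<in>B. (b,c) \<in> W"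
    and "\<And>d. d \<in> Field W \<Longrightarrow> \<forall>b\<in>B. (b,d) \<in> W \<Longrightarrow> (c,d) \<in> W"
  shows "ord_sup B = c"
  using ord_sup_props[OF assms(1,2)] assms(3-5) W_antisym by blast

lemma ord_zero_props: "ord_zero \<in> Field W" "\<And>a. a \<in> Field W \<Longrightarrow> (ord_zero, a) \<in> W"
proof -
  have ne: "Field W \<noteq> {}" using W_infinite by auto
  show "ord_zero \<in> Field W" unfolding ord_zero_def using wo_rel.minim_inField[OF W_wo _ ne] by blast
  show "\<And>a. a \<in> Field W \<Longrightarrow> (ord_zero, a) \<in> W" unfolding ord_zero_def
    using wo_rel.minim_least[OF W_wo] by blast
qed

lemma W_wf: "wf (W - Id)"
  using wo_rel.WF[OF W_wo] .


definition rk_eq :: "nat list set \<Rightarrow> (nat list \<Rightarrow> nat set) \<Rightarrow> bool" where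
  "rk_eq T f \<longleftrightarrow> (\<forall>\<nu>\<in>T. f \<nu> \<in> Field W \<and>
      f \<nu> = ord_sup {ord_succ (f (\<nu> @ [k])) | k. \<nu> @ [k] \<in> T})"

lemma rk_eqD:
  assumes "rk_eq T f" "\<nu> \<in> T"
  shows "f \<nu> \<in> Field W" "f \<nu> = ord_sup {ord_succ (f (\<nu> @ [k])) | k. \<nu> @ [k] \<in> T}"
proof -
  have h: "f \<nu> \<in> Field W \<and> f \<nu> = ord_sup {ord_succ (f (\<nu> @ [k])) | k. \<nu> @ [k] \<in> T}"
    by (rule bspec[OF assms(1)[unfolded rk_eq_def] assms(2)])
  show "f \<nu> \<in> Field W" by (rule conjunct1[OF h])
  show "f \<nu> = ord_sup {ord_succ (f (\<nu> @ [k])) | k. \<nu> @ [k] \<in> T}" by (rule conjunct2[OF h])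
qed

lemma rk_eqI:
  assumes "\<And>\<nu>. \<nu> \<in> T \<Longrightarrow> f \<nu> \<in> Field W"
    "\<And>\<nu>. \<nu> \<in> T \<Longrightarrow> f \<nu> = ord_sup {ord_succ (f (\<nu> @ [k])) | k. \<nu> @ [k] \<in> T}"
  shows "rk_eq T f"
  unfolding rk_eq_def using assms by (intro ballI conjI)

lemma compr_cong:
  assumes "\<And>k. P k \<Longrightarrow> g k = h k"
  shows "{g k | k. P k} = {h k | k. P k}"
  using assms by (metis (mono_tags, lifting))

lemma countable_compr: "countable {g k | k::nat. P k}"
proof -
  have "{g k | k::nat. P k} = g ` {k. P k}" by auto
  then show ?thesis by simp
qed

lemma Tr_take: "T \<in> Tr \<Longrightarrow> s \<in> T \<Longrightarrow> take n s \<in> T"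
  unfolding Tr_def by blast

lemma Tr_parent: "T \<in> Tr \<Longrightarrow> \<nu> @ [k] \<in> T \<Longrightarrow> \<nu> \<in> T"
  using Tr_take[of T "\<nu> @ [k]" "length \<nu>"] by simp

lemma Tr_root: "T \<in> Tr \<Longrightarrow> s \<in> T \<Longrightarrow> [] \<in> T"
  using Tr_take[of T s 0] by simp

lemma rk_succ_set:
  assumes "rk_eq T f" "T \<in> Tr" "\<nu> \<in> T"
  shows "countable {ord_succ (f (\<nu> @ [k])) | k. \<nu> @ [k] \<in> T}"
    "{ord_succ (f (\<nu> @ [k])) | k. \<nu> @ [k] \<in> T} \<subseteq> Field W"
proof -
  show "countable {ord_succ (f (\<nu> @ [k])) | k. \<nu> @ [k] \<in> T}" by (rule countable_compr)
  show "{ord_succ (f (\<nu> @ [k])) | k. \<nu> @ [k] \<in> T} \<subseteq> Field W"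
  proof
    fix y assume "y \<in> {ord_succ (f (\<nu> @ [k])) | k. \<nu> @ [k] \<in> T}"
    then obtain k where "y = ord_succ (f (\<nu> @ [k]))" "\<nu> @ [k] \<in> T" by blast
    then show "y \<in> Field W" using rk_eqD(1)[OF assms(1)] ord_succ_props(1) by metis
  qed
qed

lemma rk_child_lt:
  assumes "rk_eq T f" "T \<in> Tr" "\<nu> @ [k] \<in> T"
  shows "(f (\<nu> @ [k]), f \<nu>) \<in> W" "f (\<nu> @ [k]) \<noteq> f \<nu>"
proof -
  have nu: "\<nu> \<in> T" using Tr_parent assms by blast
  let ?S = "{ord_succ (f (\<nu> @ [k])) | k. \<nu> @ [k] \<in> T}"
  have c: "f (\<nu> @ [k]) \<in> Field W" using rk_eqD(1)[OF assms(1,3)] .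
  have m: "ord_succ (f (\<nu> @ [k])) \<in> ?S" using assms(3) by auto
  have eq: "f \<nu> = ord_sup ?S" by (rule rk_eqD(2)[OF assms(1) nu])
  have 1: "(ord_succ (f (\<nu> @ [k])), f \<nu>) \<in> W"
    unfolding eq by (rule ord_sup_props(2)[OF rk_succ_set[OF assms(1,2) nu] m])
  have 2: "(f (\<nu> @ [k]), ord_succ (f (\<nu> @ [k]))) \<in> W" using ord_succ_props(2)[OF c] .
  show "(f (\<nu> @ [k]), f \<nu>) \<in> W" using W_trans[OF 2 1] .
  show "f (\<nu> @ [k]) \<noteq> f \<nu>"
  proof
    assume "f (\<nu> @ [k]) = f \<nu>"
    then have "ord_succ (f (\<nu> @ [k])) = f (\<nu> @ [k])" using 1 2 W_antisym by metis
    then show False using ord_succ_props(3)[OF c] by metis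
  qed
qed

lemma map_upt_Suc: "map x [0..<Suc n] = map x [0..<n] @ [x n]"
  by simp

lemma rk_wf:
  assumes "T \<in> Tr" "rk_eq T f"
  shows "T \<in> Trw"
proof -
  have "\<not> (\<exists>x::nat \<Rightarrow> nat. \<forall>n. map x [0..<n] \<in> T)"
  proof
    assume "\<exists>x::nat \<Rightarrow> nat. \<forall>n. map x [0..<n] \<in> T"
    then obtain x :: "nat \<Rightarrow> nat" where x: "\<And>n. map x [0..<n] \<in> T" by blast
    define g where "g n = f (map x [0..<n])" for n
    have "(g (Suc n), g n) \<in> W - Id" for n
      using rk_child_lt[OF assms(2,1), of "map x [0..<n]" "x n"] x[of "Suc n"]
      unfolding g_def map_upt_Suc by auto
    then show False using W_wf wf_iff_no_infinite_down_chain by blast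
  qed
  then show ?thesis using assms(1) unfolding Trw_def by blast
qed

lemma rk_unique:
  assumes "rk_eq T f" "rk_eq T g" "T \<in> Tr" "\<nu> \<in> T"
  shows "f \<nu> = g \<nu>"
proof -
  have "\<forall>\<nu>. \<nu> \<in> T \<longrightarrow> f \<nu> = \<beta> \<longrightarrow> g \<nu> = \<beta>" for \<beta>
  proof (induction \<beta> rule: wf_induct[OF W_wf])
    case (1 \<beta>)
    show ?case
    proof (intro allI impI)
      fix \<nu> assume nu: "\<nu> \<in> T" and fb: "f \<nu> = \<beta>"
      have ch: "g (\<nu> @ [k]) = f (\<nu> @ [k])" if "\<nu> @ [k] \<in> T" for k
      proof -
        have "(f (\<nu> @ [k]), \<beta>) \<in> W - Id" using rk_child_lt[OF assms(1,3) that] fb by auto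
        then show ?thesis using 1 that by blast
      qed
      have "{ord_succ (g (\<nu> @ [k])) | k. \<nu> @ [k] \<in> T} = {ord_succ (f (\<nu> @ [k])) | k. \<nu> @ [k] \<in> T}"
        using compr_cong[of "\<lambda>k. \<nu> @ [k] \<in> T" "\<lambda>k. ord_succ (g (\<nu> @ [k]))" "\<lambda>k. ord_succ (f (\<nu> @ [k]))"] ch by metis
      then show "g \<nu> = \<beta>" using rk_eqD(2)[OF assms(1) nu] rk_eqD(2)[OF assms(2) nu] fb by metis
    qed
  qed
  then show ?thesis using assms(4) by blast
qed

lemma rk_exists:
  assumes T: "T \<in> Trw"
  shows "\<exists>f. rk_eq T f \<and> (\<forall>\<nu>. \<nu> \<notin> T \<longrightarrow> f \<nu> = undefined)"
proof -
  have TT: "T \<in> Tr" using T unfolding Trw_def by blast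
  define R where "R = {(\<nu> @ [k], \<nu>) | \<nu> k. \<nu> @ [k] \<in> T}"
  have wfR: "wf R"
  proof (rule ccontr)
    assume "\<not> wf R"
    then obtain c where c: "\<And>i. (c (Suc i), c i) \<in> R" using wf_iff_no_infinite_down_chain by blast
    have cs: "\<exists>k. c (Suc i) = c i @ [k] \<and> c (Suc i) \<in> T" for i
      using c[of i] unfolding R_def by auto
    define L where "L = length (c 0)"
    have len: "length (c j) = L + j" for j
    proof (induction j)
      case (Suc j) then show ?case using cs[of j] by auto
    qed (simp add: L_def)
    have pre: "i \<le> j \<Longrightarrow> take (length (c i)) (c j) = c i" for i j
    proof (induction j rule: dec_induct)
      case (step j)
      obtain k where k: "c (Suc j) = c j @ [k]" using cs[of j] by blast
      have "length (c i) \<le> length (c j)" using len step(1) by simp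
      then show ?case using step(3) k by simp
    qed simp
    have cT: "c n \<in> T" for n
    proof (cases n)
      case 0
      have "c 0 = take (length (c 0)) (c 1)" using pre[of 0 1] by simp
      then show ?thesis using Tr_take[OF TT] cs[of 0] 0 by (metis One_nat_def)
    next
      case (Suc m) then show ?thesis using cs by blast
    qed
    define x where "x n = c (Suc n) ! n" for n
    have "map x [0..<n] = take n (c n)" for n
    proof (rule nth_equalityI)
      show "length (map x [0..<n]) = length (take n (c n))" using len by simp
      fix j assume j: "j < length (map x [0..<n])"
      then have jn: "j < n" by simp
      have "c (Suc j) ! j = take (length (c (Suc j))) (c n) ! j" using pre[of "Suc j" n] jn by simp
      also have "\<dots> = c n ! j" using len jn by simp
      finally show "map x [0..<n] ! j = take n (c n) ! j" using jn x_def by simp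
    qed
    then have "\<forall>n. map x [0..<n] \<in> T" using Tr_take[OF TT cT] by simp
    then show False using T unfolding Trw_def by blast
  qed
  define H where "H = (\<lambda>g \<nu>. if \<nu> \<in> T then ord_sup {ord_succ (g (\<nu> @ [k])) | k. \<nu> @ [k] \<in> T}
                     else (undefined :: nat set))"
  define f where "f = wfrec R H"
  have feq: "f \<nu> = (if \<nu> \<in> T then ord_sup {ord_succ (f (\<nu> @ [k])) | k. \<nu> @ [k] \<in> T} else undefined)" for \<nu>
  proof -
    have "f \<nu> = H (cut f R \<nu>) \<nu>" unfolding f_def using wfrec[OF wfR] by metis
    moreover have "{ord_succ (cut f R \<nu> (\<nu> @ [k])) | k. \<nu> @ [k] \<in> T} =
                   {ord_succ (f (\<nu> @ [k])) | k. \<nu> @ [k] \<in> T}"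
    proof -
      have "\<nu> @ [k] \<in> T \<Longrightarrow> cut f R \<nu> (\<nu> @ [k]) = f (\<nu> @ [k])" for k
        by (rule cut_apply) (auto simp: R_def)
      then show ?thesis
        using compr_cong[of "\<lambda>k. \<nu> @ [k] \<in> T" "\<lambda>k. ord_succ (cut f R \<nu> (\<nu> @ [k]))" "\<lambda>k. ord_succ (f (\<nu> @ [k]))"] by metis
    qed
    ultimately show ?thesis unfolding H_def by simp
  qed
  have fF: "\<nu> \<in> T \<longrightarrow> f \<nu> \<in> Field W" for \<nu>
  proof (induction \<nu> rule: wf_induct[OF wfR])
    case (1 \<nu>)
    show ?case
    proof
      assume nu: "\<nu> \<in> T"
      have "{ord_succ (f (\<nu> @ [k])) | k. \<nu> @ [k] \<in> T} \<subseteq> Field W"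
      proof
        fix y assume "y \<in> {ord_succ (f (\<nu> @ [k])) | k. \<nu> @ [k] \<in> T}"
        then obtain k where "y = ord_succ (f (\<nu> @ [k]))" "\<nu> @ [k] \<in> T" by blast
        moreover have "(\<nu> @ [k], \<nu>) \<in> R" using \<open>\<nu> @ [k] \<in> T\<close> unfolding R_def by blast
        moreover have "f (\<nu> @ [k]) \<in> Field W" using 1 \<open>(\<nu> @ [k], \<nu>) \<in> R\<close> \<open>\<nu> @ [k] \<in> T\<close> by blast
        ultimately show "y \<in> Field W" using ord_succ_props(1) by simp
      qed
      moreover have "f \<nu> = ord_sup {ord_succ (f (\<nu> @ [k])) | k. \<nu> @ [k] \<in> T}"
        using feq[of \<nu>] nu by simp
      ultimately show "f \<nu> \<in> Field W" using ord_sup_props(1)[OF countable_compr] by simp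
    qed
  qed
  have "rk_eq T f"
  proof (rule rk_eqI)
    fix \<nu> assume "\<nu> \<in> T"
    then show "f \<nu> \<in> Field W" using fF by blast
    show "f \<nu> = ord_sup {ord_succ (f (\<nu> @ [k])) | k. \<nu> @ [k] \<in> T}"
      using feq[of \<nu>] \<open>\<nu> \<in> T\<close> by (simp only: if_True)
  qed
  moreover have "\<forall>\<nu>. \<nu> \<notin> T \<longrightarrow> f \<nu> = undefined" using feq by simp
  ultimately show ?thesis by blast
qed

definition RANK where "RANK T f \<longleftrightarrow> (\<forall>\<nu>\<in>T. f \<nu> \<in> Field W \<and>
       f \<nu> = ord_sup {ord_succ (f (\<nu> @ [k])) | k. \<nu> @ [k] \<in> T})
     \<and> (\<forall>\<nu>. \<nu> \<notin> T \<longrightarrow> f \<nu> = undefined)"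

lemma RANK_iff: "RANK T f \<longleftrightarrow> rk_eq T f \<and> (\<forall>\<nu>. \<nu> \<notin> T \<longrightarrow> f \<nu> = undefined)"
  unfolding RANK_def rk_eq_def by (rule refl)

lemma rank_fun_RANK: "rank_fun T = (THE f. RANK T f)"
  unfolding rank_fun_def RANK_def ..

lemma rank_fun_props:
  assumes "T \<in> Trw"
  shows "rk_eq T (rank_fun T)" "\<And>\<nu>. \<nu> \<notin> T \<Longrightarrow> rank_fun T \<nu> = undefined"
proof -
  have TT: "T \<in> Tr" using assms unfolding Trw_def by blast
  have ex1: "\<exists>!f. RANK T f"
  proof -
    obtain f where f: "rk_eq T f" "\<forall>\<nu>. \<nu> \<notin> T \<longrightarrow> f \<nu> = undefined" using rk_exists[OF assms] by blast
    have "RANK T f" using f unfolding RANK_iff by blast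
    moreover have "g = f" if "RANK T g" for g
    proof
      fix \<nu>
      have g: "rk_eq T g" "\<forall>\<nu>. \<nu> \<notin> T \<longrightarrow> g \<nu> = undefined" using that unfolding RANK_iff by blast+
      show "g \<nu> = f \<nu>" using rk_unique[OF g(1) f(1) TT] g(2) f(2) by (cases "\<nu> \<in> T") auto
    qed
    ultimately show ?thesis by blast
  qed
  have "RANK T (rank_fun T)" unfolding rank_fun_RANK using theI'[OF ex1] .
  then show "rk_eq T (rank_fun T)" "\<And>\<nu>. \<nu> \<notin> T \<Longrightarrow> rank_fun T \<nu> = undefined"
    unfolding RANK_iff by blast+
qed

lemma rank_fun_eqI:
  assumes "T \<in> Tr" "rk_eq T f"
  shows "T \<in> Trw" "\<And>\<nu>. \<nu> \<in> T \<Longrightarrow> rank_fun T \<nu> = f \<nu>"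
proof -
  show w: "T \<in> Trw" using rk_wf[OF assms] .
  show "\<And>\<nu>. \<nu> \<in> T \<Longrightarrow> rank_fun T \<nu> = f \<nu>"
    using rk_unique[OF rank_fun_props(1)[OF w] assms(2) assms(1)] .
qed

lemma Trw_Tr: "T \<in> Trw \<Longrightarrow> T \<in> Tr"
  unfolding Trw_def by blast

lemma rank_Field: "T \<in> Trw \<Longrightarrow> \<nu> \<in> T \<Longrightarrow> rank_fun T \<nu> \<in> Field W"
  using rk_eqD(1)[OF rank_fun_props(1)] by blast

lemma rank_child_lt:
  assumes "T \<in> Trw" "\<nu> @ [k] \<in> T"
  shows "(rank_fun T (\<nu> @ [k]), rank_fun T \<nu>) \<in> W" "rank_fun T (\<nu> @ [k]) \<noteq> rank_fun T \<nu>"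
  using rk_child_lt[OF rank_fun_props(1)[OF assms(1)] Trw_Tr[OF assms(1)] assms(2)] by blast+

lemma rank_le_root:
  assumes "T \<in> Trw" "\<nu> \<in> T"
  shows "(rank_fun T \<nu>, rank_fun T []) \<in> W"
  using assms(2)
proof (induction \<nu> rule: rev_induct)
  case Nil then show ?case using W_refl rank_Field[OF assms(1)] by blast
next
  case (snoc k \<nu>)
  have "\<nu> \<in> T" using Tr_parent[OF Trw_Tr[OF assms(1)] snoc.prems] .
  then show ?case using W_trans[OF rank_child_lt(1)[OF assms(1) snoc.prems] snoc.IH] by blast
qed


definition sub :: "nat list set \<Rightarrow> nat list \<Rightarrow> nat list set" where
  "sub T \<nu> = {s. \<nu> @ s \<in> T}"

lemma sub_Tr: "T \<in> Tr \<Longrightarrow> sub T \<nu> \<in> Tr"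
  unfolding Tr_def sub_def
proof (clarsimp)
  fix s n assume T: "\<forall>s\<in>T. \<forall>n. take n s \<in> T" and s: "\<nu> @ s \<in> T"
  have "take (length \<nu> + n) (\<nu> @ s) = \<nu> @ take n s" by simp
  then show "\<nu> @ take n s \<in> T" using T s by metis
qed

lemma sub_sub: "sub (sub T \<nu>) \<mu> = sub T (\<nu> @ \<mu>)"
  unfolding sub_def by simp

lemma sub_Nil: "sub T [] = T"
  unfolding sub_def by simp

lemma sub_rank:
  assumes S: "S \<in> Trw" and mu: "\<mu> \<in> S"
  shows "sub S \<mu> \<in> Trw" "\<And>t. t \<in> sub S \<mu> \<Longrightarrow> rank_fun (sub S \<mu>) t = rank_fun S (\<mu> @ t)"
proof -
  have SS: "S \<in> Tr" using Trw_Tr[OF S] .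
  have r: "rk_eq (sub S \<mu>) (\<lambda>t. rank_fun S (\<mu> @ t))"
  proof (rule rk_eqI)
    fix t assume t: "t \<in> sub S \<mu>"
    then have mt: "\<mu> @ t \<in> S" unfolding sub_def by simp
    show "rank_fun S (\<mu> @ t) \<in> Field W" using rank_Field[OF S mt] .
    have "rank_fun S (\<mu> @ t) = ord_sup {ord_succ (rank_fun S ((\<mu> @ t) @ [k])) | k. (\<mu> @ t) @ [k] \<in> S}"
      by (rule rk_eqD(2)[OF rank_fun_props(1)[OF S] mt])
    also have "{ord_succ (rank_fun S ((\<mu> @ t) @ [k])) | k. (\<mu> @ t) @ [k] \<in> S} =
               {ord_succ (rank_fun S (\<mu> @ (t @ [k]))) | k. t @ [k] \<in> sub S \<mu>}"
      unfolding sub_def by simp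
    finally show "rank_fun S (\<mu> @ t) = ord_sup {ord_succ (rank_fun S (\<mu> @ (t @ [k]))) | k. t @ [k] \<in> sub S \<mu>}" .
  qed
  show "sub S \<mu> \<in> Trw" using rank_fun_eqI(1)[OF sub_Tr[OF SS] r] .
  show "\<And>t. t \<in> sub S \<mu> \<Longrightarrow> rank_fun (sub S \<mu>) t = rank_fun S (\<mu> @ t)"
    using rank_fun_eqI(2)[OF sub_Tr[OF SS] r] .
qed

lemma glue:
  assumes SS: "S \<in> Tr" and e: "[] \<in> S" and ch: "\<And>k. [k] \<in> S \<Longrightarrow> sub S [k] \<in> Trw"
  shows "S \<in> Trw" "rank_fun S [] = ord_sup {ord_succ (rank_fun (sub S [k]) []) | k. [k] \<in> S}"
proof -
  define r0 where "r0 = ord_sup {ord_succ (rank_fun (sub S [k]) []) | k. [k] \<in> S}"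
  define f where "f t = (case t of [] \<Rightarrow> r0 | k # t' \<Rightarrow> rank_fun (sub S [k]) t')" for t
  have sk: "[] \<in> sub S [k]" if "[k] \<in> S" for k using that unfolding sub_def by simp
  have r: "rk_eq S f"
  proof (rule rk_eqI)
    fix t assume t: "t \<in> S"
    show "f t \<in> Field W"
    proof (cases t)
      case Nil
      have "{ord_succ (rank_fun (sub S [k]) []) | k. [k] \<in> S} \<subseteq> Field W"
      proof
        fix y assume "y \<in> {ord_succ (rank_fun (sub S [k]) []) | k. [k] \<in> S}"
        then obtain k where k: "y = ord_succ (rank_fun (sub S [k]) [])" "[k] \<in> S" by blast
        have "rank_fun (sub S [k]) [] \<in> Field W" using rank_Field[OF ch[OF k(2)] sk[OF k(2)]] .
        then show "y \<in> Field W" using k(1) ord_succ_props(1) by simp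
      qed
      then show ?thesis using Nil ord_sup_props(1)[OF countable_compr] unfolding f_def r0_def by simp
    next
      case (Cons k t')
      have k: "[k] \<in> S" using Tr_take[OF SS t, of 1] Cons by simp
      have "t' \<in> sub S [k]" using t Cons unfolding sub_def by simp
      then show ?thesis using rank_Field[OF ch[OF k]] Cons unfolding f_def by simp
    qed
    show "f t = ord_sup {ord_succ (f (t @ [k])) | k. t @ [k] \<in> S}"
    proof (cases t)
      case Nil
      have "{ord_succ (f (t @ [k])) | k. t @ [k] \<in> S} = {ord_succ (rank_fun (sub S [k]) []) | k. [k] \<in> S}"
        using Nil unfolding f_def by simp
      then show ?thesis using Nil unfolding f_def r0_def by simp
    next
      case (Cons k t')
      have k: "[k] \<in> S" using Tr_take[OF SS t, of 1] Cons by simp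
      have t': "t' \<in> sub S [k]" using t Cons unfolding sub_def by simp
      have "rank_fun (sub S [k]) t' = ord_sup {ord_succ (rank_fun (sub S [k]) (t' @ [j])) | j. t' @ [j] \<in> sub S [k]}"
        by (rule rk_eqD(2)[OF rank_fun_props(1)[OF ch[OF k]] t'])
      also have "{ord_succ (rank_fun (sub S [k]) (t' @ [j])) | j. t' @ [j] \<in> sub S [k]} =
                 {ord_succ (f (t @ [j])) | j. t @ [j] \<in> S}"
        using Cons unfolding f_def sub_def by simp
      finally show ?thesis using Cons unfolding f_def by simp
    qed
  qed
  show "S \<in> Trw" using rank_fun_eqI(1)[OF SS r] .
  show "rank_fun S [] = ord_sup {ord_succ (rank_fun (sub S [k]) []) | k. [k] \<in> S}"
    using rank_fun_eqI(2)[OF SS r e] unfolding f_def r0_def by simp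
qed

definition Q :: "nat set \<Rightarrow> nat list \<Rightarrow> nat list set set" where
  "Q \<beta> \<nu> = {T \<in> Tr. \<nu> \<notin> T \<or> (sub T \<nu> \<in> Trw \<and> (rank_fun (sub T \<nu>) [], \<beta>) \<in> W)}"

lemma Q_char:
  assumes b: "\<beta> \<in> Field W" and T: "T \<in> Tr"
  shows "T \<in> Q \<beta> \<nu> \<longleftrightarrow> (\<nu> \<notin> T \<or> (\<forall>k. \<nu> @ [k] \<in> T \<longrightarrow> (\<exists>\<gamma>\<in>underS W \<beta>. T \<in> Q \<gamma> (\<nu> @ [k]))))"
proof
  assume q: "T \<in> Q \<beta> \<nu>"
  show "\<nu> \<notin> T \<or> (\<forall>k. \<nu> @ [k] \<in> T \<longrightarrow> (\<exists>\<gamma>\<in>underS W \<beta>. T \<in> Q \<gamma> (\<nu> @ [k])))"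
  proof (cases "\<nu> \<in> T")
    case True
    define S where "S = sub T \<nu>"
    have S: "S \<in> Trw" "(rank_fun S [], \<beta>) \<in> W" using q True unfolding Q_def S_def by auto
    have "\<exists>\<gamma>\<in>underS W \<beta>. T \<in> Q \<gamma> (\<nu> @ [k])" if k: "\<nu> @ [k] \<in> T" for k
    proof -
      have kS: "[k] \<in> S" using k unfolding S_def sub_def by simp
      have e1: "sub S [k] = sub T (\<nu> @ [k])" unfolding S_def sub_sub ..
      have w: "sub S [k] \<in> Trw" using sub_rank(1)[OF S(1) kS] .
      have rr: "rank_fun (sub S [k]) [] = rank_fun S [k]"
        using sub_rank(2)[OF S(1) kS, of "[]"] kS unfolding sub_def by simp
      define \<gamma> where "\<gamma> = rank_fun S [k]"
      have lt: "(\<gamma>, rank_fun S []) \<in> W" "\<gamma> \<noteq> rank_fun S []"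
        using rank_child_lt[OF S(1), of "[]" k] kS unfolding \<gamma>_def by simp_all
      have g1: "(\<gamma>, \<beta>) \<in> W" using W_trans[OF lt(1) S(2)] .
      have g2: "\<gamma> \<noteq> \<beta>"
      proof
        assume "\<gamma> = \<beta>"
        then have "rank_fun S [] = \<gamma>" using W_antisym lt(1) S(2) by metis
        then show False using lt(2) by simp
      qed
      have gF: "\<gamma> \<in> Field W" using W_field1[OF g1] .
      have "T \<in> Q \<gamma> (\<nu> @ [k])"
        unfolding Q_def using T w rr W_refl[OF gF] e1 unfolding \<gamma>_def by simp
      moreover have "\<gamma> \<in> underS W \<beta>" unfolding underS_def using g1 g2 by simp
      ultimately show ?thesis by blast
    qed
    then show ?thesis by blast
  qed simp
next
  assume h: "\<nu> \<notin> T \<or> (\<forall>k. \<nu> @ [k] \<in> T \<longrightarrow> (\<exists>\<gamma>\<in>underS W \<beta>. T \<in> Q \<gamma> (\<nu> @ [k])))"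
  show "T \<in> Q \<beta> \<nu>"
  proof (cases "\<nu> \<in> T")
    case False then show ?thesis unfolding Q_def using T by simp
  next
    case True
    define S where "S = sub T \<nu>"
    have SS: "S \<in> Tr" unfolding S_def using sub_Tr[OF T] .
    have e: "[] \<in> S" unfolding S_def sub_def using True by simp
    have chk: "\<exists>\<gamma>\<in>underS W \<beta>. T \<in> Q \<gamma> (\<nu> @ [k])" if "[k] \<in> S" for k
      using h True that unfolding S_def sub_def by simp
    have e1: "sub S [k] = sub T (\<nu> @ [k])" for k unfolding S_def sub_sub ..
    have ch: "sub S [k] \<in> Trw \<and> (rank_fun (sub S [k]) [], \<beta>) \<in> W \<and> rank_fun (sub S [k]) [] \<noteq> \<beta>"
      if k: "[k] \<in> S" for k
    proof -
      obtain \<gamma> where g: "\<gamma> \<in> underS W \<beta>" "T \<in> Q \<gamma> (\<nu> @ [k])" using chk[OF k] by blast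
      have nk: "\<nu> @ [k] \<in> T" using k unfolding S_def sub_def by simp
      have w: "sub S [k] \<in> Trw" "(rank_fun (sub S [k]) [], \<gamma>) \<in> W"
        using g(2) nk unfolding Q_def e1 by auto
      have g1: "(\<gamma>, \<beta>) \<in> W" "\<gamma> \<noteq> \<beta>" using g(1) unfolding underS_def by auto
      have "rank_fun (sub S [k]) [] \<noteq> \<beta>"
      proof
        assume "rank_fun (sub S [k]) [] = \<beta>"
        then have "\<gamma> = \<beta>" using W_antisym w(2) g1(1) by metis
        then show False using g1(2) by simp
      qed
      then show ?thesis using w W_trans[OF w(2) g1(1)] by blast
    qed
    have gl: "S \<in> Trw" "rank_fun S [] = ord_sup {ord_succ (rank_fun (sub S [k]) []) | k. [k] \<in> S}"
      using glue[OF SS e] ch by blast+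
    have sub: "{ord_succ (rank_fun (sub S [k]) []) | k. [k] \<in> S} \<subseteq> Field W"
    proof
      fix y assume "y \<in> {ord_succ (rank_fun (sub S [k]) []) | k. [k] \<in> S}"
      then obtain k where k: "y = ord_succ (rank_fun (sub S [k]) [])" "[k] \<in> S" by blast
      have "[] \<in> sub S [k]" using k(2) unfolding sub_def by simp
      then have "rank_fun (sub S [k]) [] \<in> Field W" using rank_Field ch[OF k(2)] by blast
      then show "y \<in> Field W" using k(1) ord_succ_props(1) by simp
    qed
    have "(ord_sup {ord_succ (rank_fun (sub S [k]) []) | k. [k] \<in> S}, \<beta>) \<in> W"
    proof (rule ord_sup_props(3)[OF countable_compr sub b], intro ballI)
      fix y assume "y \<in> {ord_succ (rank_fun (sub S [k]) []) | k. [k] \<in> S}"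
      then obtain k where k: "y = ord_succ (rank_fun (sub S [k]) [])" "[k] \<in> S" by blast
      have "[] \<in> sub S [k]" using k(2) unfolding sub_def by simp
      then have F: "rank_fun (sub S [k]) [] \<in> Field W" using rank_Field ch[OF k(2)] by blast
      show "(y, \<beta>) \<in> W" using ord_succ_props(4)[OF F] ch[OF k(2)] k(1) by simp
    qed
    then show ?thesis unfolding Q_def using T gl True unfolding S_def by simp
  qed
qed

lemma A_eq:
  assumes a: "\<alpha> \<in> Field W"
  shows "A \<alpha> = {T \<in> Q \<alpha> []. [] \<in> T} - (\<Union>\<gamma>\<in>underS W \<alpha>. Q \<gamma> [])"
proof (intro set_eqI iffI)
  fix T assume T: "T \<in> A \<alpha>"
  have Tw: "T \<in> Trw" "[] \<in> T" "rank_fun T [] = \<alpha>" using T unfolding A_def by auto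
  have "T \<in> Q \<alpha> []" unfolding Q_def sub_Nil using Tw Trw_Tr W_refl[OF a] by simp
  moreover have "T \<notin> Q \<gamma> []" if "\<gamma> \<in> underS W \<alpha>" for \<gamma>
  proof
    assume "T \<in> Q \<gamma> []"
    then have "(\<alpha>, \<gamma>) \<in> W" unfolding Q_def sub_Nil using Tw by simp
    then show False using that W_antisym unfolding underS_def by blast
  qed
  ultimately show "T \<in> {T \<in> Q \<alpha> []. [] \<in> T} - (\<Union>\<gamma>\<in>underS W \<alpha>. Q \<gamma> [])" using Tw by blast
next
  fix T assume T: "T \<in> {T \<in> Q \<alpha> []. [] \<in> T} - (\<Union>\<gamma>\<in>underS W \<alpha>. Q \<gamma> [])"
  have q: "T \<in> Tr" "[] \<in> T" "T \<in> Trw" "(rank_fun T [], \<alpha>) \<in> W"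
    using T unfolding Q_def sub_Nil by auto
  have "rank_fun T [] = \<alpha>"
  proof (rule ccontr)
    assume ne: "rank_fun T [] \<noteq> \<alpha>"
    then have u: "rank_fun T [] \<in> underS W \<alpha>" unfolding underS_def using q(4) by simp
    have "T \<in> Q (rank_fun T []) []" unfolding Q_def sub_Nil
      using q W_refl[OF rank_Field[OF q(3) q(2)]] by simp
    then show False using T u by blast
  qed
  then show "T \<in> A \<alpha>" unfolding A_def using q by simp
qed


definition chi :: "nat list set \<Rightarrow> (nat list \<Rightarrow> bool)" where
  "chi T = (\<lambda>s. s \<in> T)"

lemma chi_inj: "inj chi"
  unfolding chi_def inj_def by (metis mem_Collect_eq Collect_mem_eq)

lemma Borel_Tr_iff: "Borel_Tr B \<longleftrightarrow> B \<subseteq> Tr \<and> chi ` B \<in> sets borel"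
  unfolding Borel_Tr_def chi_def by (rule refl)

lemma open_coord: "open {g :: nat list \<Rightarrow> bool. g s}"
proof -
  have "{g :: nat list \<Rightarrow> bool. g s} = (\<lambda>g. g s) -` {False<..}"
    by (auto simp: greaterThan_def less_bool_def)
  moreover have "open ((\<lambda>g::nat list \<Rightarrow> bool. g s) -` {False<..})"
    by (rule open_vimage[OF open_greaterThan continuous_on_product_coordinates])
  ultimately show ?thesis by simp
qed

lemma borel_coord: "{g :: nat list \<Rightarrow> bool. g s} \<in> sets borel"
  by (rule borel_open[OF open_coord])

lemma chi_Tr: "chi ` Tr = (\<Inter>p\<in>(UNIV :: (nat list \<times> nat) set).
           (UNIV - {g. g (fst p)}) \<union> {g. g (take (snd p) (fst p))})"
proof (intro set_eqI iffI)
  fix g assume "g \<in> chi ` Tr"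
  then obtain T where "T \<in> Tr" "g = chi T" by blast
  then show "g \<in> (\<Inter>p\<in>(UNIV :: (nat list \<times> nat) set). (UNIV - {g. g (fst p)}) \<union> {g. g (take (snd p) (fst p))})"
    unfolding chi_def Tr_def by auto
next
  fix g assume g: "g \<in> (\<Inter>p\<in>(UNIV :: (nat list \<times> nat) set). (UNIV - {g. g (fst p)}) \<union> {g. g (take (snd p) (fst p))})"
  have "{s. g s} \<in> Tr" unfolding Tr_def using g by auto
  moreover have "g = chi {s. g s}" unfolding chi_def by simp
  ultimately show "g \<in> chi ` Tr" by blast
qed

lemma BT_Tr: "Borel_Tr Tr"
proof -
  have "chi ` Tr \<in> sets borel"
    unfolding chi_Tr
    by (intro sets.countable_INT'' sets.Un sets.Diff sets.top borel_coord) auto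
  then show ?thesis unfolding Borel_Tr_iff by simp
qed

lemma BT_Un: "Borel_Tr B1 \<Longrightarrow> Borel_Tr B2 \<Longrightarrow> Borel_Tr (B1 \<union> B2)"
  unfolding Borel_Tr_iff by (auto simp: image_Un)

lemma BT_Diff: "Borel_Tr B1 \<Longrightarrow> Borel_Tr B2 \<Longrightarrow> Borel_Tr (B1 - B2)"
  unfolding Borel_Tr_iff by (auto simp: image_set_diff[OF chi_inj])

lemma BT_UN: "countable I \<Longrightarrow> (\<And>i. i \<in> I \<Longrightarrow> Borel_Tr (B i)) \<Longrightarrow> Borel_Tr (\<Union>i\<in>I. B i)"
  unfolding Borel_Tr_iff image_UN by (auto intro!: sets.countable_UN'')

lemma BT_Union: "countable F \<Longrightarrow> (\<And>B. B \<in> F \<Longrightarrow> Borel_Tr B) \<Longrightarrow> Borel_Tr (\<Union>F)"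
  using BT_UN[of F "\<lambda>B. B"] by simp

lemma BT_INT: "countable I \<Longrightarrow> (\<And>i. i \<in> I \<Longrightarrow> Borel_Tr (B i)) \<Longrightarrow> Borel_Tr (Tr \<inter> (\<Inter>i\<in>I. B i))"
proof -
  assume I: "countable I" and B: "\<And>i. i \<in> I \<Longrightarrow> Borel_Tr (B i)"
  have "Tr \<inter> (\<Inter>i\<in>I. B i) = Tr - (\<Union>i\<in>I. Tr - B i)" by blast
  moreover have "Borel_Tr (Tr - (\<Union>i\<in>I. Tr - B i))"
    by (intro BT_Diff BT_Tr BT_UN I B)
  ultimately show ?thesis by simp
qed

lemma BT_mem: "Borel_Tr {T \<in> Tr. s \<in> T}"
proof -
  have "chi ` {T \<in> Tr. s \<in> T} = chi ` Tr \<inter> {g. g s}" unfolding chi_def by auto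
  moreover have "chi ` Tr \<in> sets borel" using BT_Tr unfolding Borel_Tr_iff by simp
  ultimately show ?thesis unfolding Borel_Tr_iff using borel_coord by auto
qed

lemma BT_nmem: "Borel_Tr {T \<in> Tr. s \<notin> T}"
proof -
  have "{T \<in> Tr. s \<notin> T} = Tr - {T \<in> Tr. s \<in> T}" by blast
  then show ?thesis using BT_Diff[OF BT_Tr BT_mem] by simp
qed

lemma Q_sub: "Q \<beta> \<nu> \<subseteq> Tr"
  unfolding Q_def by blast

lemma Q_Borel: "\<beta> \<in> Field W \<Longrightarrow> Borel_Tr (Q \<beta> \<nu>)"
proof (induction \<beta> arbitrary: \<nu> rule: wf_induct[OF W_wf])
  case (1 \<beta>)
  have eq: "Q \<beta> \<nu> = {T \<in> Tr. \<nu> \<notin> T} \<union> (Tr \<inter> (\<Inter>k\<in>(UNIV::nat set).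
              {T \<in> Tr. \<nu> @ [k] \<notin> T} \<union> (\<Union>\<gamma>\<in>underS W \<beta>. Q \<gamma> (\<nu> @ [k]))))"
  proof (intro set_eqI iffI)
    fix T assume T: "T \<in> Q \<beta> \<nu>"
    have TT: "T \<in> Tr" using T Q_sub by blast
    show "T \<in> {T \<in> Tr. \<nu> \<notin> T} \<union> (Tr \<inter> (\<Inter>k\<in>(UNIV::nat set).
              {T \<in> Tr. \<nu> @ [k] \<notin> T} \<union> (\<Union>\<gamma>\<in>underS W \<beta>. Q \<gamma> (\<nu> @ [k]))))"
      using T Q_char[OF 1(2) TT, of \<nu>] TT by blast
  next
    fix T assume T: "T \<in> {T \<in> Tr. \<nu> \<notin> T} \<union> (Tr \<inter> (\<Inter>k\<in>(UNIV::nat set).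
              {T \<in> Tr. \<nu> @ [k] \<notin> T} \<union> (\<Union>\<gamma>\<in>underS W \<beta>. Q \<gamma> (\<nu> @ [k]))))"
    then have TT: "T \<in> Tr" by blast
    show "T \<in> Q \<beta> \<nu>" using T Q_char[OF 1(2) TT, of \<nu>] by blast
  qed
  have ih: "Borel_Tr (Q \<gamma> \<mu>)" if "\<gamma> \<in> underS W \<beta>" for \<gamma> \<mu>
  proof -
    have "(\<gamma>, \<beta>) \<in> W - Id" using that unfolding underS_def by auto
    moreover have "\<gamma> \<in> Field W" using that W_field1 unfolding underS_def by blast
    ultimately show ?thesis using 1(1) by blast
  qed
  show ?case unfolding eq
    by (intro BT_Un BT_nmem BT_INT BT_UN countable_underS ih) auto
qed

lemma A_Borel: "\<alpha> \<in> Field W \<Longrightarrow> Borel_Tr (A \<alpha>)"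
proof -
  assume a: "\<alpha> \<in> Field W"
  have "{T \<in> Q \<alpha> []. [] \<in> T} = Q \<alpha> [] - {T \<in> Tr. [] \<notin> T}" using Q_sub by blast
  then have "A \<alpha> = (Q \<alpha> [] - {T \<in> Tr. [] \<notin> T}) - (\<Union>\<gamma>\<in>underS W \<alpha>. Q \<gamma> [])"
    using A_eq[OF a] by simp
  moreover have "Borel_Tr ((Q \<alpha> [] - {T \<in> Tr. [] \<notin> T}) - (\<Union>\<gamma>\<in>underS W \<alpha>. Q \<gamma> []))"
  proof (intro BT_Diff Q_Borel a BT_nmem BT_UN countable_underS)
    fix \<gamma> assume "\<gamma> \<in> underS W \<alpha>"
    then show "\<gamma> \<in> Field W" using W_field1 unfolding underS_def by blast
  qed
  ultimately show ?thesis by simp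
qed


definition lt :: "nat set \<Rightarrow> nat set \<Rightarrow> bool" where
  "lt a b \<longleftrightarrow> (a, b) \<in> W \<and> a \<noteq> b"

lemma lt_trans: "lt a b \<Longrightarrow> lt b c \<Longrightarrow> lt a c"
  unfolding lt_def using W_trans W_antisym by metis

lemma lt_underS: "lt a b \<longleftrightarrow> a \<in> underS W b"
  unfolding lt_def underS_def by auto

lemma sup_succ_underS:
  assumes b: "\<beta> \<in> Field W"
  shows "ord_sup {ord_succ \<gamma> | \<gamma>. \<gamma> \<in> underS W \<beta>} = \<beta>"
proof (rule ord_sup_eqI)
  have "{ord_succ \<gamma> | \<gamma>. \<gamma> \<in> underS W \<beta>} = ord_succ ` underS W \<beta>" by auto
  then show "countable {ord_succ \<gamma> | \<gamma>. \<gamma> \<in> underS W \<beta>}" using countable_underS by simp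
  show "{ord_succ \<gamma> | \<gamma>. \<gamma> \<in> underS W \<beta>} \<subseteq> Field W"
  proof
    fix y assume "y \<in> {ord_succ \<gamma> | \<gamma>. \<gamma> \<in> underS W \<beta>}"
    then obtain \<gamma> where g: "y = ord_succ \<gamma>" "\<gamma> \<in> underS W \<beta>" by blast
    then have "\<gamma> \<in> Field W" unfolding underS_def using W_field1 by blast
    then show "y \<in> Field W" using g ord_succ_props(1) by simp
  qed
  show "\<beta> \<in> Field W" by (rule b)
  show "\<forall>y\<in>{ord_succ \<gamma> | \<gamma>. \<gamma> \<in> underS W \<beta>}. (y, \<beta>) \<in> W"
  proof
    fix y assume "y \<in> {ord_succ \<gamma> | \<gamma>. \<gamma> \<in> underS W \<beta>}"
    then obtain \<gamma> where g: "y = ord_succ \<gamma>" "\<gamma> \<in> underS W \<beta>" by blast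
    then have "\<gamma> \<in> Field W" "(\<gamma>, \<beta>) \<in> W" "\<gamma> \<noteq> \<beta>" unfolding underS_def using W_field1 by blast+
    then show "(y, \<beta>) \<in> W" using g ord_succ_props(4) by simp
  qed
  show "(\<beta>, d) \<in> W" if d: "d \<in> Field W" "\<forall>y\<in>{ord_succ \<gamma> | \<gamma>. \<gamma> \<in> underS W \<beta>}. (y, d) \<in> W" for d
  proof (rule ccontr)
    assume "(\<beta>, d) \<notin> W"
    then have "(d, \<beta>) \<in> W" "d \<noteq> \<beta>" using W_total[OF b d(1)] W_refl[OF b] by auto
    then have "d \<in> underS W \<beta>" unfolding underS_def by simp
    then have "(ord_succ d, d) \<in> W" using d(2) by blast
    then show False using ord_succ_props(2,3)[OF d(1)] W_antisym by metis
  qed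
qed

lemma A_nonempty:
  assumes a: "\<alpha> \<in> Field W"
  shows "A \<alpha> \<noteq> {}"
proof -
  define D where "D = underS W \<alpha>"
  have cD: "countable D" unfolding D_def by (rule countable_underS)
  define e where "e = to_nat_on D"
  define dec where "dec = from_nat_into D"
  have dec_e: "x \<in> D \<Longrightarrow> dec (e x) = x" for x unfolding dec_def e_def using from_nat_into_to_nat_on[OF cD] by simp
  define P where "P = (\<lambda>a b. lt (dec b) (dec a))"
  have Ptrans: "P a b \<Longrightarrow> P b c \<Longrightarrow> P a c" for a b c unfolding P_def using lt_trans[of "dec c" "dec b" "dec a"] by simp
  define T where "T = {s. set s \<subseteq> e ` D \<and> sorted_wrt P s}"
  define \<rho> where "\<rho> s = (if s = [] then \<alpha> else dec (last s))" for s
  have TT: "T \<in> Tr" unfolding Tr_def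
  proof (intro CollectI ballI allI)
    fix s n assume "s \<in> T"
    then have h: "set s \<subseteq> e ` D" "sorted_wrt P s" unfolding T_def by auto
    have "set (take n s) \<subseteq> e ` D" by (rule order_trans[OF set_take_subset h(1)])
    moreover have "sorted_wrt P (take n s)" by (rule sorted_wrt_take[OF h(2)])
    ultimately show "take n s \<in> T" unfolding T_def by simp
  qed
  have last_min: "x = last s \<or> P x (last s)" if "sorted_wrt P s" "s \<noteq> []" "x \<in> set s" for s x
  proof -
    have s: "s = butlast s @ [last s]" using that(2) by simp
    have "sorted_wrt P (butlast s @ [last s])" using that(1) s by metis
    then have "\<forall>y\<in>set (butlast s). P y (last s)" by (simp add: sorted_wrt_append)
    moreover have "x \<in> set (butlast s) \<or> x = last s" using that(3) s
      by (metis Un_iff empty_iff empty_set list.set(2) set_append insert_iff)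
    ultimately show ?thesis by blast
  qed
  have child: "s @ [k] \<in> T \<longleftrightarrow> k \<in> e ` D \<and> (s \<noteq> [] \<longrightarrow> lt (dec k) (dec (last s)))" if s: "s \<in> T" for s k
  proof -
    have s1: "set s \<subseteq> e ` D" "sorted_wrt P s" using s unfolding T_def by auto
    have "s @ [k] \<in> T \<longleftrightarrow> k \<in> e ` D \<and> (\<forall>x\<in>set s. P x k)"
      unfolding T_def using s1 by (auto simp: sorted_wrt_append)
    moreover have "(\<forall>x\<in>set s. P x k) \<longleftrightarrow> (s \<noteq> [] \<longrightarrow> lt (dec k) (dec (last s)))"
    proof
      assume "\<forall>x\<in>set s. P x k"
      then show "s \<noteq> [] \<longrightarrow> lt (dec k) (dec (last s))" unfolding P_def by auto
    next
      assume h: "s \<noteq> [] \<longrightarrow> lt (dec k) (dec (last s))"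
      show "\<forall>x\<in>set s. P x k"
      proof
        fix x assume x: "x \<in> set s"
        then have ne: "s \<noteq> []" by auto
        have pk: "P (last s) k" using h ne unfolding P_def by simp
        show "P x k" using last_min[OF s1(2) ne x] pk Ptrans by blast
      qed
    qed
    ultimately show ?thesis by simp
  qed
  have rhoF: "\<rho> s \<in> Field W \<and> (\<rho> s = \<alpha> \<or> lt (\<rho> s) \<alpha>)" if s: "s \<in> T" for s
  proof (cases "s = []")
    case True then show ?thesis using a unfolding \<rho>_def by simp
  next
    case False
    then have "last s \<in> set s" by simp
    then have "last s \<in> e ` D" using s unfolding T_def by auto
    then have "dec (last s) \<in> D" using dec_e by auto
    then show ?thesis unfolding \<rho>_def D_def underS_def lt_def using False W_field1 by auto
  qed
  have r: "rk_eq T \<rho>"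
  proof (rule rk_eqI)
    fix s assume s: "s \<in> T"
    show "\<rho> s \<in> Field W" using rhoF[OF s] by blast
    have "{ord_succ (\<rho> (s @ [k])) | k. s @ [k] \<in> T} = {ord_succ \<gamma> | \<gamma>. \<gamma> \<in> underS W (\<rho> s)}"
    proof (intro set_eqI iffI)
      fix y assume "y \<in> {ord_succ (\<rho> (s @ [k])) | k. s @ [k] \<in> T}"
      then obtain k where k: "y = ord_succ (\<rho> (s @ [k]))" "s @ [k] \<in> T" by blast
      have c: "k \<in> e ` D" "s \<noteq> [] \<longrightarrow> lt (dec k) (dec (last s))" using child[OF s] k(2) by auto
      have "dec k \<in> D" using c(1) dec_e by auto
      then have "lt (dec k) (\<rho> s)" using c(2) unfolding \<rho>_def D_def lt_underS by auto
      then have "\<rho> (s @ [k]) \<in> underS W (\<rho> s)" unfolding \<rho>_def lt_underS by simp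
      then show "y \<in> {ord_succ \<gamma> | \<gamma>. \<gamma> \<in> underS W (\<rho> s)}" using k(1) by blast
    next
      fix y assume "y \<in> {ord_succ \<gamma> | \<gamma>. \<gamma> \<in> underS W (\<rho> s)}"
      then obtain \<gamma> where g: "y = ord_succ \<gamma>" "\<gamma> \<in> underS W (\<rho> s)" by blast
      have gD: "\<gamma> \<in> D"
      proof (cases "\<rho> s = \<alpha>")
        case True then show ?thesis using g(2) unfolding D_def by simp
      next
        case False
        then have "lt (\<rho> s) \<alpha>" using rhoF[OF s] by blast
        then have "lt \<gamma> \<alpha>" using g(2) lt_trans unfolding lt_underS[symmetric] by blast
        then show ?thesis unfolding D_def lt_underS .
      qed
      define k where "k = e \<gamma>"
      have dk: "dec k = \<gamma>" unfolding k_def using dec_e[OF gD] .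
      have "s @ [k] \<in> T"
        unfolding child[OF s] using gD g(2) dk unfolding k_def \<rho>_def lt_underS by (auto split: if_splits)
      moreover have "\<rho> (s @ [k]) = \<gamma>" unfolding \<rho>_def using dk by simp
      ultimately show "y \<in> {ord_succ (\<rho> (s @ [k])) | k. s @ [k] \<in> T}" using g(1) by blast
    qed
    then show "\<rho> s = ord_sup {ord_succ (\<rho> (s @ [k])) | k. s @ [k] \<in> T}"
      using sup_succ_underS[of "\<rho> s"] rhoF[OF s] by simp
  qed
  have e: "[] \<in> T" unfolding T_def by simp
  have "T \<in> Trw" "rank_fun T [] = \<rho> []" using rank_fun_eqI[OF TT r] e by auto
  then have "T \<in> A \<alpha>" unfolding A_def \<rho>_def using e by simp
  then show ?thesis by blast
qed


lemma U_sub: "U \<alpha> n T \<subseteq> A \<alpha>"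
  unfolding U_def by blast

lemma U_self: "T \<in> A \<alpha> \<Longrightarrow> T \<in> U \<alpha> n T"
  unfolding U_def by blast

lemma box_mono: "n \<le> m \<Longrightarrow> box n \<subseteq> box m"
  unfolding box_def by auto

lemma U_memD:
  assumes "T' \<in> U \<alpha> n T"
  shows "T' \<in> A \<alpha>" "T' \<inter> box n = T \<inter> box n" "\<And>\<nu>. \<nu> \<in> T \<inter> box n \<Longrightarrow> rank_fun T' \<nu> = rank_fun T \<nu>"
  using assms unfolding U_def by blast+

lemma U_memI:
  assumes "T' \<in> A \<alpha>" "T' \<inter> box n = T \<inter> box n" "\<And>\<nu>. \<nu> \<in> T \<inter> box n \<Longrightarrow> rank_fun T' \<nu> = rank_fun T \<nu>"
  shows "T' \<in> U \<alpha> n T"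
  using assms unfolding U_def by blast

lemma U_mono:
  assumes x: "x \<in> U \<alpha> n T" and m: "n \<le> m"
  shows "U \<alpha> m x \<subseteq> U \<alpha> n T"
proof
  fix T' assume T': "T' \<in> U \<alpha> m x"
  have bm: "box n \<subseteq> box m" using box_mono[OF m] .
  have e1: "T' \<inter> box m = x \<inter> box m" using U_memD(2)[OF T'] .
  have e2: "x \<inter> box n = T \<inter> box n" using U_memD(2)[OF x] .
  have e3: "T' \<inter> box n = T \<inter> box n"
  proof -
    have "T' \<inter> box n = (T' \<inter> box m) \<inter> box n" using bm by blast
    also have "\<dots> = (x \<inter> box m) \<inter> box n" using e1 by simp
    also have "\<dots> = x \<inter> box n" using bm by blast
    finally show ?thesis using e2 by simp
  qed
  show "T' \<in> U \<alpha> n T"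
  proof (rule U_memI[OF U_memD(1)[OF T'] e3])
    fix \<nu> assume nu: "\<nu> \<in> T \<inter> box n"
    then have "\<nu> \<in> x \<inter> box n" using e2 by blast
    then have nx: "\<nu> \<in> x \<inter> box m" using bm by blast
    show "rank_fun T' \<nu> = rank_fun T \<nu>"
      using U_memD(3)[OF T' nx] U_memD(3)[OF x nu] by simp
  qed
qed

lemma topspace_tau: "topspace (tau \<alpha>) = A \<alpha>"
  unfolding tau_def topology_generated_by_topspace
proof
  show "\<Union> {U \<alpha> n T |n T. T \<in> A \<alpha>} \<subseteq> A \<alpha>" using U_sub by blast
  show "A \<alpha> \<subseteq> \<Union> {U \<alpha> n T |n T. T \<in> A \<alpha>}"
  proof
    fix T assume "T \<in> A \<alpha>"
    then show "T \<in> \<Union> {U \<alpha> n T |n T. T \<in> A \<alpha>}" using U_self[of T \<alpha> 0] by blast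
  qed
qed

lemma open_U: "T \<in> A \<alpha> \<Longrightarrow> openin (tau \<alpha>) (U \<alpha> n T)"
  unfolding tau_def by (rule topology_generated_by_Basis) blast

lemma open_nbhd_aux:
  assumes "generate_topology_on {U \<alpha> n T |n T. T \<in> A \<alpha>} V"
  shows "x \<in> V \<Longrightarrow> x \<in> A \<alpha> \<Longrightarrow> \<exists>n. U \<alpha> n x \<subseteq> V"
  using assms
proof (induction arbitrary: x rule: generate_topology_on.induct)
  case Empty then show ?case by simp
next
  case (Int a b)
  obtain n1 where n1: "U \<alpha> n1 x \<subseteq> a" using Int by blast
  obtain n2 where n2: "U \<alpha> n2 x \<subseteq> b" using Int by blast
  have "U \<alpha> (max n1 n2) x \<subseteq> U \<alpha> n1 x" by (rule U_mono[OF U_self[OF Int.prems(2)]]) simp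
  moreover have "U \<alpha> (max n1 n2) x \<subseteq> U \<alpha> n2 x" by (rule U_mono[OF U_self[OF Int.prems(2)]]) simp
  ultimately show ?case using n1 n2 by blast
next
  case (UN K)
  then obtain k where "k \<in> K" "x \<in> k" by blast
  then show ?case using UN by blast
next
  case (Basis s)
  then obtain n T where s: "s = U \<alpha> n T" by blast
  have "U \<alpha> n x \<subseteq> U \<alpha> n T" using U_mono[of x \<alpha> n T n] Basis.prems(1) s by simp
  then show ?case using s by blast
qed

lemma open_nbhd:
  assumes "openin (tau \<alpha>) V" "x \<in> V"
  shows "\<exists>n. U \<alpha> n x \<subseteq> V"
proof -
  have "x \<in> A \<alpha>" using openin_subset[OF assms(1)] assms(2) topspace_tau by blast
  moreover have "generate_topology_on {U \<alpha> n T |n T. T \<in> A \<alpha>} V"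
    using assms(1) unfolding tau_def openin_topology_generated_by_iff .
  ultimately show ?thesis using open_nbhd_aux assms(2) by blast
qed

lemma nd_step:
  assumes N: "nowhere_dense_in (tau \<alpha>) N" and x: "x \<in> A \<alpha>"
  shows "\<exists>y m. m > n \<and> y \<in> U \<alpha> n x \<and> U \<alpha> m y \<subseteq> U \<alpha> n x \<and> U \<alpha> m y \<inter> N = {}"
proof -
  let ?X = "tau \<alpha>"
  have Nsub: "N \<subseteq> topspace ?X" and ie: "?X interior_of (?X closure_of N) = {}"
    using N unfolding nowhere_dense_in_def by auto
  have oU: "openin ?X (U \<alpha> n x)" using open_U[OF x] .
  have "\<not> U \<alpha> n x \<subseteq> ?X closure_of N"
  proof
    assume "U \<alpha> n x \<subseteq> ?X closure_of N"
    then have "U \<alpha> n x \<subseteq> ?X interior_of (?X closure_of N)" using interior_of_maximal oU by blast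
    then show False using ie U_self[OF x] by blast
  qed
  then obtain y where y: "y \<in> U \<alpha> n x" "y \<notin> ?X closure_of N" by blast
  have yA: "y \<in> A \<alpha>" using y(1) U_sub by blast
  have oC: "openin ?X (topspace ?X - ?X closure_of N)" by (rule openin_diff) auto
  have "y \<in> topspace ?X - ?X closure_of N" using yA y(2) topspace_tau by blast
  then obtain m0 where m0: "U \<alpha> m0 y \<subseteq> topspace ?X - ?X closure_of N" using open_nbhd[OF oC] by blast
  define m where "m = max m0 (Suc n)"
  have "U \<alpha> m y \<subseteq> U \<alpha> m0 y" unfolding m_def by (rule U_mono[OF U_self[OF yA]]) simp
  moreover have "U \<alpha> m y \<subseteq> U \<alpha> n x" unfolding m_def by (rule U_mono[OF y(1)]) simp
  moreover have "N \<subseteq> ?X closure_of N" using closure_of_subset[OF Nsub] .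
  ultimately have "U \<alpha> m y \<subseteq> U \<alpha> n x \<and> U \<alpha> m y \<inter> N = {}" using m0 by blast
  moreover have "m > n" unfolding m_def by simp
  ultimately show ?thesis using y(1) by blast
qed

lemma box_take: "s \<in> box n \<Longrightarrow> take k s \<in> box n"
  unfolding box_def by (auto dest: in_set_takeD)

lemma box_parent: "\<nu> @ [k] \<in> box n \<Longrightarrow> \<nu> \<in> box n"
  unfolding box_def by auto

lemma box_big: "length s + sum_list s < n \<Longrightarrow> s \<in> box n"
  unfolding box_def
proof (intro CollectI conjI ballI)
  assume h: "length s + sum_list s < n"
  then show "length s \<le> n" by simp
  fix x assume "x \<in> set s"
  then have "x \<le> sum_list s" using member_le_sum_list by blast
  then show "x < n" using h by simp
qed

lemma wit_step:
  assumes x: "x \<in> A \<alpha>" and nu: "\<nu> \<in> x" and g: "lt \<gamma> (rank_fun x \<nu>)"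
  shows "\<exists>k. \<nu> @ [k] \<in> x \<and> (\<gamma>, rank_fun x (\<nu> @ [k])) \<in> W"
proof (rule ccontr)
  assume "\<not> (\<exists>k. \<nu> @ [k] \<in> x \<and> (\<gamma>, rank_fun x (\<nu> @ [k])) \<in> W)"
  then have nk: "\<And>k. \<nu> @ [k] \<in> x \<Longrightarrow> (\<gamma>, rank_fun x (\<nu> @ [k])) \<notin> W" by blast
  have xw: "x \<in> Trw" using x unfolding A_def by blast
  have xT: "x \<in> Tr" using Trw_Tr[OF xw] .
  have gF: "\<gamma> \<in> Field W" using g W_field1 unfolding lt_def by blast
  let ?S = "{ord_succ (rank_fun x (\<nu> @ [k])) | k. \<nu> @ [k] \<in> x}"
  have eq: "rank_fun x \<nu> = ord_sup ?S" by (rule rk_eqD(2)[OF rank_fun_props(1)[OF xw] nu])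
  have "(ord_sup ?S, \<gamma>) \<in> W"
  proof (rule ord_sup_props(3)[OF rk_succ_set[OF rank_fun_props(1)[OF xw] xT nu] gF], intro ballI)
    fix y assume "y \<in> ?S"
    then obtain k where k: "y = ord_succ (rank_fun x (\<nu> @ [k]))" "\<nu> @ [k] \<in> x" by blast
    have F: "rank_fun x (\<nu> @ [k]) \<in> Field W" using rank_Field[OF xw k(2)] .
    have "(rank_fun x (\<nu> @ [k]), \<gamma>) \<in> W" "rank_fun x (\<nu> @ [k]) \<noteq> \<gamma>"
      using nk[OF k(2)] W_total[OF F gF] W_refl[OF gF] by auto
    then show "(y, \<gamma>) \<in> W" using ord_succ_props(4)[OF F] k(1) by simp
  qed
  then have "(rank_fun x \<nu>, \<gamma>) \<in> W" using eq by simp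
  then show False using g W_antisym unfolding lt_def by blast
qed


lemma baire_basic:
  fixes Ns :: "nat \<Rightarrow> nat list set set"
  assumes a: "\<alpha> \<in> Field W" and x0: "x0 \<in> A \<alpha>" and N: "\<And>i. nowhere_dense_in (tau \<alpha>) (Ns i)"
  shows "\<exists>L \<in> U \<alpha> n0 x0. \<forall>i. L \<notin> Ns i"
proof -
  define Req where "Req = (UNIV :: nat list set) \<times> underS W \<alpha>"
  have cR: "countable Req" unfolding Req_def by (intro countable_SIGMA countableI_type countable_underS)
  define r where "r j = from_nat_into Req (fst (prod_decode j))" for j
  define Pst where "Pst i x n y m \<longleftrightarrow> m > n \<and> y \<in> U \<alpha> n x \<and> U \<alpha> m y \<subseteq> U \<alpha> n x \<and> U \<alpha> m y \<inter> Ns i = {} \<and>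
     (fst (r i) \<in> x \<inter> box n \<and> lt (snd (r i)) (rank_fun x (fst (r i))) \<longrightarrow>
        (\<exists>k. fst (r i) @ [k] \<in> y \<inter> box m \<and> (snd (r i), rank_fun y (fst (r i) @ [k])) \<in> W))"
    for i :: nat and x n y m
  have step_ex: "\<exists>q. Pst i x n (fst q) (snd q)" if x: "x \<in> A \<alpha>" for i x n
  proof -
    define \<nu> where "\<nu> = fst (r i)"
    define \<gamma> where "\<gamma> = snd (r i)"
    obtain m1 where m1: "m1 > n" "\<nu> \<in> x \<inter> box n \<and> lt \<gamma> (rank_fun x \<nu>) \<longrightarrow>
        (\<exists>k. \<nu> @ [k] \<in> x \<inter> box m1 \<and> (\<gamma>, rank_fun x (\<nu> @ [k])) \<in> W)"
    proof (cases "\<nu> \<in> x \<inter> box n \<and> lt \<gamma> (rank_fun x \<nu>)")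
      case True
      then obtain k where k: "\<nu> @ [k] \<in> x" "(\<gamma>, rank_fun x (\<nu> @ [k])) \<in> W"
        using wit_step[OF x] by blast
      define m1 where "m1 = max (Suc n) (length (\<nu> @ [k]) + sum_list (\<nu> @ [k]) + 1)"
      have b: "\<nu> @ [k] \<in> box m1" unfolding m1_def by (rule box_big) simp
      have g: "m1 > n" unfolding m1_def by simp
      show ?thesis by (rule that[OF g]) (use b k in blast)
    next
      case False
      then show ?thesis using that[of "Suc n"] by blast
    qed
    have xs: "x \<in> U \<alpha> m1 x" using U_self[OF x] .
    have sub1: "U \<alpha> m1 x \<subseteq> U \<alpha> n x" using U_mono[OF U_self[OF x]] m1(1) by simp
    obtain y m where y: "m > m1" "y \<in> U \<alpha> m1 x" "U \<alpha> m y \<subseteq> U \<alpha> m1 x" "U \<alpha> m y \<inter> Ns i = {}"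
      using nd_step[OF N x, of m1] by blast
    have wit: "\<exists>k. \<nu> @ [k] \<in> y \<inter> box m \<and> (\<gamma>, rank_fun y (\<nu> @ [k])) \<in> W"
      if c: "\<nu> \<in> x \<inter> box n \<and> lt \<gamma> (rank_fun x \<nu>)"
    proof -
      obtain k where k: "\<nu> @ [k] \<in> x \<inter> box m1" "(\<gamma>, rank_fun x (\<nu> @ [k])) \<in> W" using m1(2) c by blast
      have "\<nu> @ [k] \<in> y \<inter> box m1" using U_memD(2)[OF y(2)] k(1) by blast
      then have "\<nu> @ [k] \<in> y \<inter> box m" using box_mono[of m1 m] y(1) by auto
      moreover have "rank_fun y (\<nu> @ [k]) = rank_fun x (\<nu> @ [k])" using U_memD(3)[OF y(2) k(1)] .
      ultimately show ?thesis using k(2) by auto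
    qed
    have "Pst i x n y m"
      unfolding Pst_def using y sub1 wit m1(1) unfolding \<nu>_def \<gamma>_def by auto
    then show ?thesis by (intro exI[of _ "(y, m)"]) simp
  qed
  define sq :: "nat \<Rightarrow> nat list set \<times> nat" where
    "sq = rec_nat (x0, n0) (\<lambda>i p. SOME q. Pst i (fst p) (snd p) (fst q) (snd q))"
  define x where "x i = fst (sq i)" for i
  define n where "n i = snd (sq i)" for i
  have sq0: "x 0 = x0" "n 0 = n0" unfolding x_def n_def sq_def by simp_all
  have sqS: "sq (Suc i) = (SOME q. Pst i (x i) (n i) (fst q) (snd q))" for i
    unfolding sq_def x_def n_def by simp
  have xA: "x i \<in> A \<alpha> \<and> Pst i (x i) (n i) (x (Suc i)) (n (Suc i))" for i
  proof (induction i)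
    case 0
    have "Pst 0 (x 0) (n 0) (fst (sq (Suc 0))) (snd (sq (Suc 0)))"
      unfolding sqS using someI_ex[OF step_ex[of "x 0" 0 "n 0"]] x0 sq0 by simp
    then show ?case using x0 sq0 unfolding x_def n_def by simp
  next
    case (Suc i)
    have "x (Suc i) \<in> U \<alpha> (n i) (x i)" using Suc unfolding Pst_def by blast
    then have xs: "x (Suc i) \<in> A \<alpha>" using U_sub by blast
    have "Pst (Suc i) (x (Suc i)) (n (Suc i)) (fst (sq (Suc (Suc i)))) (snd (sq (Suc (Suc i))))"
      unfolding sqS[of "Suc i"] using someI_ex[OF step_ex[OF xs, of "Suc i" "n (Suc i)"]] by simp
    then show ?case using xs unfolding x_def n_def by simp
  qed
  have xAi: "x i \<in> A \<alpha>" for i using xA by blast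
  have Pi: "Pst i (x i) (n i) (x (Suc i)) (n (Suc i))" for i using xA by blast
  have xw: "x i \<in> Trw" for i using xAi[of i] unfolding A_def by blast
  have ngt: "n (Suc i) > n i" for i using Pi[of i] unfolding Pst_def by blast
  have nge: "n i \<ge> i" for i
  proof (induction i)
    case (Suc i) then show ?case using ngt[of i] by simp
  qed simp
  have Usub: "i \<le> j \<Longrightarrow> U \<alpha> (n j) (x j) \<subseteq> U \<alpha> (n i) (x i)" for i j
  proof (induction j rule: dec_induct)
    case (step j)
    have "U \<alpha> (n (Suc j)) (x (Suc j)) \<subseteq> U \<alpha> (n j) (x j)" using Pi[of j] unfolding Pst_def by blast
    then show ?case using step by blast
  qed simp
  have xin: "i \<le> j \<Longrightarrow> x j \<in> U \<alpha> (n i) (x i)" for i j using Usub U_self[OF xAi] by blast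
  define L where "L = (\<Union>i. x i \<inter> box (n i))"
  have LB: "L \<inter> box (n i) = x i \<inter> box (n i)" for i
  proof
    show "x i \<inter> box (n i) \<subseteq> L \<inter> box (n i)" unfolding L_def by blast
    show "L \<inter> box (n i) \<subseteq> x i \<inter> box (n i)"
    proof
      fix s assume "s \<in> L \<inter> box (n i)"
      then obtain j where s: "s \<in> x j" "s \<in> box (n j)" "s \<in> box (n i)" unfolding L_def by blast
      show "s \<in> x i \<inter> box (n i)"
      proof (cases "j \<le> i")
        case True
        then have eq: "x i \<inter> box (n j) = x j \<inter> box (n j)" using U_memD(2)[OF xin[OF True]] by simp
        have "s \<in> x j \<inter> box (n j)" using s by simp
        then have "s \<in> x i \<inter> box (n j)" unfolding eq .
        then show ?thesis using s by simp
      next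
        case False
        then have eq: "x j \<inter> box (n i) = x i \<inter> box (n i)" using U_memD(2)[OF xin[of i j]] by simp
        have "s \<in> x j \<inter> box (n i)" using s by simp
        then show ?thesis unfolding eq .
      qed
    qed
  qed
  have rcons: "rank_fun (x j) \<nu> = rank_fun (x i) \<nu>" if "i \<le> j" "\<nu> \<in> x i \<inter> box (n i)" for i j \<nu>
    using U_memD(3)[OF xin[OF that(1)] that(2)] .
  define idx where "idx \<nu> = length \<nu> + sum_list \<nu> + 1" for \<nu> :: "nat list"
  have inbox: "idx \<nu> \<le> i \<Longrightarrow> \<nu> \<in> box (n i)" for \<nu> i
    using box_big[of \<nu> "n i"] nge[of i] unfolding idx_def by simp
  define \<rho> where "\<rho> \<nu> = rank_fun (x (idx \<nu>)) \<nu>" for \<nu>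
  have P6: "\<nu> \<in> x i \<and> rank_fun (x i) \<nu> = \<rho> \<nu>" if nu: "\<nu> \<in> L" "\<nu> \<in> box (n i)" for \<nu> i
  proof -
    have ni: "\<nu> \<in> x i \<inter> box (n i)" using LB[of i] nu by blast
    define j where "j = idx \<nu>"
    have nj: "\<nu> \<in> x j \<inter> box (n j)" using LB[of j] nu inbox[of \<nu> j] unfolding j_def by blast
    have "rank_fun (x i) \<nu> = rank_fun (x j) \<nu>"
    proof (cases "i \<le> j")
      case True then show ?thesis using rcons[OF True ni] by simp
    next
      case False then show ?thesis using rcons[of j i, OF _ nj] by simp
    qed
    then show ?thesis using ni unfolding \<rho>_def j_def by simp
  qed
  have LT: "L \<in> Tr" unfolding Tr_def
  proof (intro CollectI ballI allI)
    fix s k assume "s \<in> L"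
    then obtain i where "s \<in> x i" "s \<in> box (n i)" unfolding L_def by blast
    then have "take k s \<in> x i \<inter> box (n i)" using Tr_take[OF Trw_Tr[OF xw[of i]]] box_take by blast
    then show "take k s \<in> L" unfolding L_def by blast
  qed
  have rhoF: "\<rho> \<nu> \<in> Field W" if "\<nu> \<in> L" for \<nu>
    using P6[OF that inbox[OF order_refl]] rank_Field[OF xw] by metis
  have r: "rk_eq L \<rho>"
  proof (rule rk_eqI)
    fix \<nu> assume nu: "\<nu> \<in> L"
    show "\<rho> \<nu> \<in> Field W" using rhoF[OF nu] .
    let ?S = "{ord_succ (\<rho> (\<nu> @ [k])) | k. \<nu> @ [k] \<in> L}"
    have Ssub: "?S \<subseteq> Field W"
    proof
      fix y assume "y \<in> ?S"
      then obtain k where k: "y = ord_succ (\<rho> (\<nu> @ [k]))" "\<nu> @ [k] \<in> L" by blast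
      show "y \<in> Field W" using ord_succ_props(1)[OF rhoF[OF k(2)]] k(1) by simp
    qed
    show "\<rho> \<nu> = ord_sup ?S"
    proof (rule sym, rule ord_sup_eqI[OF countable_compr Ssub rhoF[OF nu]])
      show "\<forall>y\<in>?S. (y, \<rho> \<nu>) \<in> W"
      proof
        fix y assume "y \<in> ?S"
        then obtain k where k: "y = ord_succ (\<rho> (\<nu> @ [k]))" "\<nu> @ [k] \<in> L" by blast
        define i where "i = idx (\<nu> @ [k])"
        have cb: "\<nu> @ [k] \<in> box (n i)" unfolding i_def by (rule inbox) simp
        have pb: "\<nu> \<in> box (n i)" using box_parent[OF cb] .
        have c6: "\<nu> @ [k] \<in> x i" "rank_fun (x i) (\<nu> @ [k]) = \<rho> (\<nu> @ [k])" using P6[OF k(2) cb] by auto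
        have p6: "rank_fun (x i) \<nu> = \<rho> \<nu>" using P6[OF nu pb] by auto
        have "(\<rho> (\<nu> @ [k]), \<rho> \<nu>) \<in> W" "\<rho> (\<nu> @ [k]) \<noteq> \<rho> \<nu>"
          using rank_child_lt[OF xw c6(1)] c6(2) p6 by auto
        then show "(y, \<rho> \<nu>) \<in> W" using ord_succ_props(4)[OF rhoF[OF k(2)]] k(1) by simp
      qed
      show "(\<rho> \<nu>, d) \<in> W" if d: "d \<in> Field W" "\<forall>y\<in>?S. (y, d) \<in> W" for d
      proof (rule ccontr)
        assume nd: "(\<rho> \<nu>, d) \<notin> W"
        have ld: "lt d (\<rho> \<nu>)" using W_total[OF rhoF[OF nu] d(1)] nd W_refl[OF d(1)] unfolding lt_def by auto
        define i0 where "i0 = idx \<nu>"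
        have b0: "\<nu> \<in> box (n i0)" unfolding i0_def by (rule inbox) simp
        have "\<nu> \<in> x i0" "rank_fun (x i0) \<nu> = \<rho> \<nu>" using P6[OF nu b0] by auto
        then have "(\<rho> \<nu>, \<alpha>) \<in> W" using rank_le_root[OF xw] xAi[of i0] unfolding A_def by force
        then have "lt d \<alpha>" using ld W_trans W_antisym unfolding lt_def by metis
        then have "(\<nu>, d) \<in> Req" unfolding Req_def lt_underS by simp
        then obtain j0 where j0: "from_nat_into Req j0 = (\<nu>, d)" using from_nat_into_surj[OF cR] by blast
        define i where "i = prod_encode (j0, idx \<nu>)"
        have ri: "r i = (\<nu>, d)" unfolding r_def i_def using j0 by simp
        have ii: "idx \<nu> \<le> i" unfolding i_def by (rule le_prod_encode_2)
        have bi: "\<nu> \<in> box (n i)" using inbox[OF ii] .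
        have ci: "\<nu> \<in> x i" "rank_fun (x i) \<nu> = \<rho> \<nu>" using P6[OF nu bi] by auto
        have "\<exists>k. \<nu> @ [k] \<in> x (Suc i) \<inter> box (n (Suc i)) \<and> (d, rank_fun (x (Suc i)) (\<nu> @ [k])) \<in> W"
          using Pi[of i] ri ci bi ld unfolding Pst_def by simp
        then obtain k where k: "\<nu> @ [k] \<in> x (Suc i)" "\<nu> @ [k] \<in> box (n (Suc i))"
            "(d, rank_fun (x (Suc i)) (\<nu> @ [k])) \<in> W" by blast
        have kL: "\<nu> @ [k] \<in> L" unfolding L_def using k(1,2) by blast
        have "rank_fun (x (Suc i)) (\<nu> @ [k]) = \<rho> (\<nu> @ [k])" using P6[OF kL k(2)] by simp
        then have dc: "(d, \<rho> (\<nu> @ [k])) \<in> W" using k(3) by simp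
        have "(ord_succ (\<rho> (\<nu> @ [k])), d) \<in> W" using d(2) kL by blast
        then have "(ord_succ (\<rho> (\<nu> @ [k])), \<rho> (\<nu> @ [k])) \<in> W" using W_trans dc by blast
        then show False using ord_succ_props(2,3)[OF rhoF[OF kL]] W_antisym by metis
      qed
    qed
  qed
  have Lw: "L \<in> Trw" using rank_fun_eqI(1)[OF LT r] .
  have Lr: "\<nu> \<in> L \<Longrightarrow> rank_fun L \<nu> = \<rho> \<nu>" for \<nu> using rank_fun_eqI(2)[OF LT r] .
  have e0: "[] \<in> x 0" using xAi[of 0] unfolding A_def by blast
  have eb: "[] \<in> box (n 0)" unfolding box_def by simp
  have eL: "[] \<in> L" unfolding L_def using e0 eb by blast
  have "rank_fun L [] = \<alpha>"
    using Lr[OF eL] P6[OF eL eb] xAi[of 0] unfolding A_def by simp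
  then have LA: "L \<in> A \<alpha>" unfolding A_def using Lw eL by simp
  have LU: "L \<in> U \<alpha> (n i) (x i)" for i
  proof (rule U_memI[OF LA LB])
    fix \<nu> assume nu: "\<nu> \<in> x i \<inter> box (n i)"
    then have "\<nu> \<in> L" unfolding L_def by blast
    then show "rank_fun L \<nu> = rank_fun (x i) \<nu>" using Lr P6 nu by auto
  qed
  have "L \<notin> Ns i" for i
    using LU[of "Suc i"] Pi[of i] unfolding Pst_def by blast
  then show ?thesis using LU[of 0] sq0 by auto
qed

lemma baire_open:
  assumes a: "\<alpha> \<in> Field W" and V: "openin (tau \<alpha>) V" "V \<noteq> {}"
  shows "\<not> meager_in (tau \<alpha>) V"
proof
  assume "meager_in (tau \<alpha>) V"
  then obtain F where F: "countable F" "\<forall>N\<in>F. nowhere_dense_in (tau \<alpha>) N" "V \<subseteq> \<Union>F"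
    unfolding meager_in_def by blast
  have Fne: "F \<noteq> {}" using F(3) V(2) by auto
  define Ns where "Ns = from_nat_into F"
  have rng: "range Ns = F" unfolding Ns_def using range_from_nat_into[OF Fne F(1)] .
  have N: "nowhere_dense_in (tau \<alpha>) (Ns i)" for i using F(2) rng by blast
  obtain x0 where x0: "x0 \<in> V" using V(2) by blast
  have x0A: "x0 \<in> A \<alpha>" using openin_subset[OF V(1)] x0 topspace_tau by blast
  obtain n0 where n0: "U \<alpha> n0 x0 \<subseteq> V" using open_nbhd[OF V(1) x0] by blast
  obtain L where L: "L \<in> U \<alpha> n0 x0" "\<forall>i. L \<notin> Ns i" using baire_basic[of \<alpha> x0 Ns n0] a x0A N by blast
  have "L \<in> \<Union>F" using L(1) n0 F(3) by blast
  then show False using L(2) rng by blast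
qed


lemma nd_subset: "nowhere_dense_in X N \<Longrightarrow> M \<subseteq> N \<Longrightarrow> nowhere_dense_in X M"
proof -
  assume N: "nowhere_dense_in X N" and M: "M \<subseteq> N"
  have 1: "X interior_of (X closure_of M) \<subseteq> X interior_of (X closure_of N)"
    by (rule interior_of_mono[OF closure_of_mono[OF M]])
  have Ns: "N \<subseteq> topspace X" and e: "X interior_of (X closure_of N) = {}"
    using N unfolding nowhere_dense_in_def by (simp_all only: simp_thms)
  show ?thesis unfolding nowhere_dense_in_def
  proof (intro conjI)
    show "M \<subseteq> topspace X" by (rule order_trans[OF M Ns])
    show "X interior_of (X closure_of M) = {}" using 1 unfolding e by (rule subset_empty[THEN iffD1])
  qed
qed

lemma meager_subset: "meager_in X S \<Longrightarrow> T \<subseteq> S \<Longrightarrow> meager_in X T"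
proof -
  assume m: "meager_in X S" and TS: "T \<subseteq> S"
  obtain F where F: "countable F" "\<forall>N\<in>F. nowhere_dense_in X N" "S \<subseteq> \<Union>F"
    using m unfolding meager_in_def by (elim exE conjE) (intro that)
  have "T \<subseteq> \<Union>F" by (rule order_trans[OF TS F(3)])
  then show ?thesis unfolding meager_in_def using F(1,2) by (intro exI[of _ F] conjI)
qed

lemma meager_empty: "meager_in X {}"
  unfolding meager_in_def by (intro exI[of _ "{}"]) simp

lemma nd_meager: "nowhere_dense_in X N \<Longrightarrow> meager_in X N"
  unfolding meager_in_def by (intro exI[of _ "{N}"]) simp

lemma meager_Union:
  assumes "countable F" "\<And>S. S \<in> F \<Longrightarrow> meager_in X S"
  shows "meager_in X (\<Union>F)"
proof -
  have "\<forall>S\<in>F. \<exists>G. countable G \<and> (\<forall>N\<in>G. nowhere_dense_in X N) \<and> S \<subseteq> \<Union>G"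
    using assms(2) unfolding meager_in_def by (intro ballI) simp
  then obtain G where G: "\<And>S. S \<in> F \<Longrightarrow> countable (G S) \<and> (\<forall>N\<in>G S. nowhere_dense_in X N) \<and> S \<subseteq> \<Union>(G S)"
    by (metis (no_types))
  have c: "countable (\<Union>S\<in>F. G S)" using assms(1) G by (intro countable_UN) simp_all
  have n: "\<forall>N\<in>(\<Union>S\<in>F. G S). nowhere_dense_in X N"
  proof
    fix N assume "N \<in> (\<Union>S\<in>F. G S)"
    then obtain S where "S \<in> F" "N \<in> G S" by (elim UN_E)
    then show "nowhere_dense_in X N" using G by simp
  qed
  have u: "\<Union>F \<subseteq> \<Union>(\<Union>S\<in>F. G S)"
  proof
    fix x assume "x \<in> \<Union>F"
    then obtain S where S: "S \<in> F" "x \<in> S" by (elim UnionE)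
    have "S \<subseteq> \<Union>(G S)" using G[OF S(1)] by (elim conjE)
    then have "x \<in> \<Union>(G S)" using S(2) by (rule subsetD)
    then show "x \<in> \<Union>(\<Union>S\<in>F. G S)" using S(1) by auto
  qed
  show ?thesis unfolding meager_in_def using c n u by (intro exI[of _ "\<Union>S\<in>F. G S"] conjI)
qed

lemma meager_Un: "meager_in X S \<Longrightarrow> meager_in X T \<Longrightarrow> meager_in X (S \<union> T)"
proof -
  assume a: "meager_in X S" "meager_in X T"
  have "meager_in X (\<Union>{S, T})" by (rule meager_Union) (use a in auto)
  then show ?thesis by simp
qed

lemma nd_frontier:
  assumes V: "openin X V"
  shows "nowhere_dense_in X (X closure_of V - V)"
proof -
  let ?F = "X closure_of V - V"
  have cl: "closedin X ?F" by (intro closedin_diff closedin_closure_of V)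
  have "X interior_of ?F = {}"
  proof -
    let ?I = "X interior_of ?F"
    have oI: "openin X ?I" by simp
    have sI: "?I \<subseteq> ?F" by (rule interior_of_subset)
    then have "?I \<inter> V = {}" by blast
    then have "?I \<inter> X closure_of V = {}" using openin_Int_closure_of_eq_empty[OF oI] by blast
    then show ?thesis using sI by blast
  qed
  moreover have "?F \<subseteq> topspace X" by (rule order_trans[OF Diff_subset closure_of_subset_topspace])
  ultimately show ?thesis unfolding nowhere_dense_in_def closure_of_closedin[OF cl] by simp
qed

definition BP :: "'a topology \<Rightarrow> 'a set \<Rightarrow> bool" where
  "BP X S \<longleftrightarrow> (\<exists>V. openin X V \<and> meager_in X ((S - V) \<union> (V - S)))"

lemma BP_open: "openin X V \<Longrightarrow> BP X V"
  unfolding BP_def using meager_empty by (intro exI[of _ V]) simp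

lemma BP_compl:
  assumes "BP X S"
  shows "BP X (topspace X - S)"
proof -
  obtain V where V: "openin X V" "meager_in X ((S - V) \<union> (V - S))" using assms unfolding BP_def by blast
  let ?V' = "topspace X - X closure_of V"
  have o: "openin X ?V'" by (rule openin_diff) auto
  have Vt: "V \<subseteq> X closure_of V" using closure_of_subset[OF openin_subset[OF V(1)]] .
  have ct: "X closure_of V \<subseteq> topspace X" by (rule closure_of_subset_topspace)
  have sub: "((topspace X - S) - ?V') \<union> (?V' - (topspace X - S)) \<subseteq> ((S - V) \<union> (V - S)) \<union> (X closure_of V - V)"
  proof (rule subsetI)
    fix x assume x: "x \<in> ((topspace X - S) - ?V') \<union> (?V' - (topspace X - S))"
    show "x \<in> ((S - V) \<union> (V - S)) \<union> (X closure_of V - V)"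
    proof (cases "x \<in> V")
      case True then show ?thesis using x Vt by auto
    next
      case False then show ?thesis using x by auto
    qed
  qed
  have m: "meager_in X (((S - V) \<union> (V - S)) \<union> (X closure_of V - V))"
    by (rule meager_Un[OF V(2) nd_meager[OF nd_frontier[OF V(1)]]])
  have "meager_in X (((topspace X - S) - ?V') \<union> (?V' - (topspace X - S)))"
    by (rule meager_subset[OF m sub])
  then show ?thesis unfolding BP_def using o by (intro exI[of _ ?V'] conjI)
qed

lemma BP_Union:
  assumes "countable F" "\<And>S. S \<in> F \<Longrightarrow> BP X S"
  shows "BP X (\<Union>F)"
proof -
  have "\<forall>S\<in>F. \<exists>V. openin X V \<and> meager_in X ((S - V) \<union> (V - S))"
    using assms(2) unfolding BP_def by blast
  then obtain V where V: "\<And>S. S \<in> F \<Longrightarrow> openin X (V S) \<and> meager_in X ((S - V S) \<union> (V S - S))"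
    by metis
  have o: "openin X (\<Union>S\<in>F. V S)" using V by blast
  have sub: "((\<Union>F) - (\<Union>S\<in>F. V S)) \<union> ((\<Union>S\<in>F. V S) - \<Union>F) \<subseteq> \<Union>((\<lambda>S. (S - V S) \<union> (V S - S)) ` F)"
    by blast
  have m: "meager_in X (\<Union>((\<lambda>S. (S - V S) \<union> (V S - S)) ` F))"
    using V assms(1) by (intro meager_Union) auto
  have "meager_in X (((\<Union>F) - (\<Union>S\<in>F. V S)) \<union> ((\<Union>S\<in>F. V S) - \<Union>F))"
    by (rule meager_subset[OF m sub])
  then show ?thesis unfolding BP_def using o by (intro exI[of _ "\<Union>S\<in>F. V S"] conjI)
qed

lemma BP_empty: "BP X {}"
  by (rule BP_open) simp

lemma open_coord_tau: "openin (tau \<alpha>) {T \<in> A \<alpha>. (k \<in> T) = b}"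
proof (subst openin_subopen, intro ballI)
  fix T assume T: "T \<in> {T \<in> A \<alpha>. (k \<in> T) = b}"
  define m where "m = length k + sum_list k + 1"
  have kb: "k \<in> box m" unfolding m_def by (rule box_big) simp
  have "U \<alpha> m T \<subseteq> {T \<in> A \<alpha>. (k \<in> T) = b}"
  proof
    fix T' assume T': "T' \<in> U \<alpha> m T"
    have e: "T' \<inter> box m = T \<inter> box m" using U_memD(2)[OF T'] .
    have "(k \<in> T') = (k \<in> T' \<inter> box m)" using kb by simp
    also have "\<dots> = (k \<in> T \<inter> box m)" unfolding e ..
    also have "\<dots> = (k \<in> T)" using kb by simp
    finally have "(k \<in> T') = (k \<in> T)" .
    then show "T' \<in> {T \<in> A \<alpha>. (k \<in> T) = b}" using T U_memD(1)[OF T'] by simp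
  qed
  moreover have "openin (tau \<alpha>) (U \<alpha> m T)" using open_U T by simp
  moreover have "T \<in> U \<alpha> m T" using U_self T by simp
  ultimately show "\<exists>S. openin (tau \<alpha>) S \<and> T \<in> S \<and> S \<subseteq> {T \<in> A \<alpha>. (k \<in> T) = b}"
    by (intro exI[of _ "U \<alpha> m T"] conjI)
qed

lemma chi_cont: "continuous_map (tau \<alpha>) (euclidean :: (nat list \<Rightarrow> bool) topology) chi"
proof -
  have "continuous_map (tau \<alpha>) (euclidean :: bool topology) (\<lambda>T. chi T k)" for k
    unfolding continuous_map
  proof (intro conjI allI impI)
    show "(\<lambda>T. chi T k) ` topspace (tau \<alpha>) \<subseteq> topspace euclidean" by simp
    fix B :: "bool set" assume "openin euclidean B"
    have "{x \<in> topspace (tau \<alpha>). chi x k \<in> B} = (if True \<in> B then {T \<in> A \<alpha>. (k \<in> T) = True} else {}) \<union>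
            (if False \<in> B then {T \<in> A \<alpha>. (k \<in> T) = False} else {})"
      unfolding topspace_tau chi_def
      by (rule set_eqI, rename_tac x, case_tac "k \<in> x"; cases "True \<in> B"; cases "False \<in> B") auto
    moreover have o1: "openin (tau \<alpha>) {T \<in> A \<alpha>. k \<in> T}" using open_coord_tau[of \<alpha> k True] by simp
    moreover have o2: "openin (tau \<alpha>) {T \<in> A \<alpha>. k \<notin> T}" using open_coord_tau[of \<alpha> k False] by simp
    ultimately show "openin (tau \<alpha>) {x \<in> topspace (tau \<alpha>). chi x k \<in> B}"
      by (auto intro: openin_Un)
  qed
  then have "continuous_map (tau \<alpha>) (product_topology (\<lambda>i. euclidean :: bool topology) UNIV) chi"
    unfolding continuous_map_componentwise_UNIV by blast
  then show ?thesis unfolding euclidean_product_topology .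
qed

lemma borel_BP:
  assumes "Y \<in> sets (borel :: (nat list \<Rightarrow> bool) measure)"
  shows "BP (tau \<alpha>) (chi -` Y \<inter> A \<alpha>)"
proof -
  have "Y \<in> sigma_sets UNIV {S. open S}" using assms sets_borel by metis
  then show ?thesis
  proof (induction rule: sigma_sets.induct)
    case (Basic a)
    then have "openin euclidean a" by simp
    then have "openin (tau \<alpha>) {x \<in> topspace (tau \<alpha>). chi x \<in> a}"
      using chi_cont unfolding continuous_map by blast
    moreover have "{x \<in> topspace (tau \<alpha>). chi x \<in> a} = chi -` a \<inter> A \<alpha>" unfolding topspace_tau by blast
    ultimately show ?case using BP_open by metis
  next
    case Empty then show ?case using BP_empty by simp
  next
    case (Compl a)
    have "chi -` (UNIV - a) \<inter> A \<alpha> = topspace (tau \<alpha>) - (chi -` a \<inter> A \<alpha>)" unfolding topspace_tau by blast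
    then show ?case using BP_compl[OF Compl.IH] by simp
  next
    case (Union a)
    have "chi -` (\<Union>i. a i) \<inter> A \<alpha> = \<Union>(range (\<lambda>i. chi -` a i \<inter> A \<alpha>))" by blast
    moreover have "BP (tau \<alpha>) (\<Union>(range (\<lambda>i. chi -` a i \<inter> A \<alpha>)))"
      using Union.IH by (intro BP_Union) auto
    ultimately show ?case by simp
  qed
qed

lemma Borel_BP:
  assumes "Borel_Tr B"
  shows "BP (tau \<alpha>) (B \<inter> A \<alpha>)"
proof -
  have "chi ` B \<in> sets borel" using assms unfolding Borel_Tr_iff by simp
  moreover have "chi -` (chi ` B) = B" using chi_inj by (simp add: inj_vimage_image_eq)
  ultimately show ?thesis using borel_BP[of "chi ` B" \<alpha>] by simp
qed


lemma A_disj: "\<alpha> \<noteq> \<beta> \<Longrightarrow> A \<alpha> \<inter> A \<beta> = {}"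
  unfolding A_def by auto

lemma A_sub_Tr: "A \<alpha> \<subseteq> Tr"
  unfolding A_def Trw_def by auto

lemma A_nonmeager:
  assumes "\<alpha> \<in> Field W"
  shows "\<not> meager_in (tau \<alpha>) (A \<alpha>)"
proof -
  have "openin (tau \<alpha>) (A \<alpha>)" using openin_topspace[of "tau \<alpha>"] unfolding topspace_tau .
  then show ?thesis using baire_open[OF assms] A_nonempty[OF assms] by blast
qed

lemma IstarI:
  assumes "Borel_Tr B" "S \<subseteq> B" "\<And>\<alpha>. \<alpha> \<in> Field W \<Longrightarrow> \<alpha> \<noteq> ord_zero \<Longrightarrow> meager_in (tau \<alpha>) (B \<inter> A \<alpha>)"
  shows "S \<in> Istar"
  unfolding Istar_def using assms by blast

lemma IstarE:
  assumes "S \<in> Istar"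
  obtains B where "Borel_Tr B" "S \<subseteq> B" "\<And>\<alpha>. \<alpha> \<in> Field W \<Longrightarrow> \<alpha> \<noteq> ord_zero \<Longrightarrow> meager_in (tau \<alpha>) (B \<inter> A \<alpha>)"
  using assms unfolding Istar_def by blast

lemma Istar_meager:
  assumes "S \<in> Istar" "\<alpha> \<in> Field W" "\<alpha> \<noteq> ord_zero"
  shows "meager_in (tau \<alpha>) (S \<inter> A \<alpha>)"
proof -
  obtain B where B: "Borel_Tr B" "S \<subseteq> B" "\<And>\<alpha>. \<alpha> \<in> Field W \<Longrightarrow> \<alpha> \<noteq> ord_zero \<Longrightarrow> meager_in (tau \<alpha>) (B \<inter> A \<alpha>)"
    using IstarE[OF assms(1)] by blast
  have "S \<inter> A \<alpha> \<subseteq> B \<inter> A \<alpha>" using B(2) by blast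
  then show ?thesis using meager_subset[OF B(3)[OF assms(2,3)]] by blast
qed

lemma ord_one: "ord_succ ord_zero \<in> Field W" "ord_succ ord_zero \<noteq> ord_zero"
  using ord_succ_props(1,3)[OF ord_zero_props(1)] by auto

lemma A_notin_Istar:
  assumes "\<alpha> \<in> Field W" "\<alpha> \<noteq> ord_zero"
  shows "A \<alpha> \<notin> Istar"
proof
  assume "A \<alpha> \<in> Istar"
  then have "meager_in (tau \<alpha>) (A \<alpha> \<inter> A \<alpha>)" using Istar_meager assms by blast
  then show False using A_nonmeager[OF assms(1)] by simp
qed

lemma finite_box: "finite (box n)"
proof -
  have "box n \<subseteq> {xs. set xs \<subseteq> {..<n} \<and> length xs \<le> n}" unfolding box_def by auto
  moreover have "finite {xs. set xs \<subseteq> {..<n} \<and> length xs \<le> n}" by (rule finite_lists_length_le) simp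
  ultimately show ?thesis by (rule finite_subset)
qed

lemma countable_under: "countable (under W \<alpha>)"
proof -
  have "under W \<alpha> \<subseteq> insert \<alpha> (underS W \<alpha>)" unfolding under_def underS_def by auto
  moreover have "countable (insert \<alpha> (underS W \<alpha>))" using countable_underS by simp
  ultimately show ?thesis by (rule countable_subset)
qed

lemma countable_Bas: "countable {U \<alpha> n T | n T. T \<in> A \<alpha>}"
proof -
  define Cd where "Cd = (SIGMA n:(UNIV::nat set). SIGMA S:Pow (box n). Pi\<^sub>E S (\<lambda>_. under W \<alpha>))"
  define g where "g = (\<lambda>(n, S, h). {T' \<in> A \<alpha>. T' \<inter> box n = S \<and> (\<forall>\<nu>\<in>S. rank_fun T' \<nu> = h \<nu>)})"
  have cC: "countable Cd" unfolding Cd_def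
  proof (intro countable_SIGMA countableI_type)
    fix n S assume "S \<in> Pow (box n)"
    then have "finite S" using finite_box finite_subset by blast
    then show "countable (Pi\<^sub>E S (\<lambda>_. under W \<alpha>))" using countable_under by (intro countable_PiE) auto
  next
    fix n show "countable (Pow (box n))" using finite_box by (intro countable_finite) simp
  qed
  have "{U \<alpha> n T | n T. T \<in> A \<alpha>} \<subseteq> g ` Cd"
  proof
    fix Y assume "Y \<in> {U \<alpha> n T | n T. T \<in> A \<alpha>}"
    then obtain n T where Y: "Y = U \<alpha> n T" "T \<in> A \<alpha>" by blast
    have Tw: "T \<in> Trw" and r0: "rank_fun T [] = \<alpha>" using Y(2) unfolding A_def by auto
    define S where "S = T \<inter> box n"
    define h where "h = restrict (rank_fun T) S"
    have "h \<in> Pi\<^sub>E S (\<lambda>_. under W \<alpha>)"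
      unfolding h_def under_def using rank_le_root[OF Tw] r0 unfolding S_def by auto
    then have c: "(n, S, h) \<in> Cd" unfolding Cd_def S_def by auto
    have gg: "g (n, S, h) = {T' \<in> A \<alpha>. T' \<inter> box n = S \<and> (\<forall>\<nu>\<in>S. rank_fun T' \<nu> = h \<nu>)}"
      unfolding g_def by simp
    have "Y = g (n, S, h)" unfolding Y(1) gg U_def
    proof (rule Collect_cong)
      fix T' show "(T' \<in> A \<alpha> \<and> T' \<inter> box n = T \<inter> box n \<and> (\<forall>\<nu>\<in>T \<inter> box n. rank_fun T' \<nu> = rank_fun T \<nu>)) =
          (T' \<in> A \<alpha> \<and> T' \<inter> box n = S \<and> (\<forall>\<nu>\<in>S. rank_fun T' \<nu> = h \<nu>))"
        unfolding h_def S_def by simp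
    qed
    then show "Y \<in> g ` Cd" using c by blast
  qed
  then show ?thesis by (rule countable_subset[OF _ countable_image[OF cC]])
qed

theorem proposition5p4:
  shows
    \<comment> \<open>sigma-ideal of subsets of Tr\<close>
    "(\<forall>S\<in>Istar. S \<subseteq> Tr)
   \<and> (\<forall>S S'. S \<in> Istar \<and> S' \<subseteq> S \<longrightarrow> S' \<in> Istar)
   \<and> (\<forall>F. countable F \<and> F \<subseteq> Istar \<longrightarrow> \<Union>F \<in> Istar)
    \<comment> \<open>Borel: every member is covered by a Borel member\<close>
   \<and> (\<forall>S\<in>Istar. \<exists>B. Borel_Tr B \<and> S \<subseteq> B \<and> B \<in> Istar)
    \<comment> \<open>non-trivial\<close>
   \<and> Tr \<notin> Istar
    \<comment> \<open>not ccc\<close>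
   \<and> (\<exists>F. (\<forall>B\<in>F. Borel_Tr B \<and> B \<notin> Istar)
          \<and> (\<forall>B1\<in>F. \<forall>B2\<in>F. B1 \<noteq> B2 \<longrightarrow> B1 \<inter> B2 = {})
          \<and> \<not> countable F)
    \<comment> \<open>omega_2-chain condition\<close>
   \<and> \<not> (\<exists>F. (\<forall>B\<in>F. Borel_Tr B \<and> B \<notin> Istar)
          \<and> (\<forall>B1\<in>F. \<forall>B2\<in>F. B1 \<noteq> B2 \<longrightarrow> B1 \<inter> B2 \<in> Istar)
          \<and> (cardSuc (cardSuc natLeq), card_of F) \<in> ordLeq)"
proof (intro conjI)
  show "\<forall>S\<in>Istar. S \<subseteq> Tr"
  proof
    fix S assume "S \<in> Istar"
    then obtain B where "Borel_Tr B" "S \<subseteq> B" by (rule IstarE; blast)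
    then show "S \<subseteq> Tr" unfolding Borel_Tr_iff by blast
  qed
  show "\<forall>S S'. S \<in> Istar \<and> S' \<subseteq> S \<longrightarrow> S' \<in> Istar"
  proof (intro allI impI)
    fix S S' assume h: "S \<in> Istar \<and> S' \<subseteq> S"
    have hS: "S \<in> Istar" using h by simp
    obtain B where B: "Borel_Tr B" "S \<subseteq> B" "\<And>\<alpha>. \<alpha> \<in> Field W \<Longrightarrow> \<alpha> \<noteq> ord_zero \<Longrightarrow> meager_in (tau \<alpha>) (B \<inter> A \<alpha>)"
      using hS by (rule IstarE; blast)
    show "S' \<in> Istar" by (rule IstarI[OF B(1) _ B(3)]) (use h B(2) in blast)
  qed
  show "\<forall>F. countable F \<and> F \<subseteq> Istar \<longrightarrow> \<Union>F \<in> Istar"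
  proof (intro allI impI)
    fix F assume h: "countable F \<and> F \<subseteq> Istar"
    have "\<forall>S\<in>F. \<exists>B. Borel_Tr B \<and> S \<subseteq> B \<and> (\<forall>\<alpha>. \<alpha> \<in> Field W \<longrightarrow> \<alpha> \<noteq> ord_zero \<longrightarrow> meager_in (tau \<alpha>) (B \<inter> A \<alpha>))"
    proof
      fix S assume "S \<in> F"
      then have "S \<in> Istar" using h by blast
      then obtain B where B: "Borel_Tr B" "S \<subseteq> B" "\<And>\<alpha>. \<alpha> \<in> Field W \<Longrightarrow> \<alpha> \<noteq> ord_zero \<Longrightarrow> meager_in (tau \<alpha>) (B \<inter> A \<alpha>)"
        by (rule IstarE; blast)
      then show "\<exists>B. Borel_Tr B \<and> S \<subseteq> B \<and> (\<forall>\<alpha>. \<alpha> \<in> Field W \<longrightarrow> \<alpha> \<noteq> ord_zero \<longrightarrow> meager_in (tau \<alpha>) (B \<inter> A \<alpha>))"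
        by blast
    qed
    then obtain Bf where Bf: "\<And>S. S \<in> F \<Longrightarrow> Borel_Tr (Bf S) \<and> S \<subseteq> Bf S \<and>
        (\<forall>\<alpha>. \<alpha> \<in> Field W \<longrightarrow> \<alpha> \<noteq> ord_zero \<longrightarrow> meager_in (tau \<alpha>) (Bf S \<inter> A \<alpha>))"
      by metis
    have cF: "countable F" using h by blast
    show "\<Union>F \<in> Istar"
    proof (rule IstarI)
      show "Borel_Tr (\<Union>S\<in>F. Bf S)" using cF Bf by (intro BT_UN) auto
      show "\<Union>F \<subseteq> (\<Union>S\<in>F. Bf S)" using Bf by blast
      fix \<alpha> assume a: "\<alpha> \<in> Field W" "\<alpha> \<noteq> ord_zero"
      have "(\<Union>S\<in>F. Bf S) \<inter> A \<alpha> = \<Union>((\<lambda>S. Bf S \<inter> A \<alpha>) ` F)" by blast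
      moreover have "meager_in (tau \<alpha>) (\<Union>((\<lambda>S. Bf S \<inter> A \<alpha>) ` F))"
        using cF Bf a by (intro meager_Union) auto
      ultimately show "meager_in (tau \<alpha>) ((\<Union>S\<in>F. Bf S) \<inter> A \<alpha>)" by simp
    qed
  qed
  show "\<forall>S\<in>Istar. \<exists>B. Borel_Tr B \<and> S \<subseteq> B \<and> B \<in> Istar"
  proof
    fix S assume "S \<in> Istar"
    then obtain B where B: "Borel_Tr B" "S \<subseteq> B" "\<And>\<alpha>. \<alpha> \<in> Field W \<Longrightarrow> \<alpha> \<noteq> ord_zero \<Longrightarrow> meager_in (tau \<alpha>) (B \<inter> A \<alpha>)"
      by (rule IstarE; blast)
    have "B \<in> Istar" by (rule IstarI[OF B(1) order_refl B(3)])
    then show "\<exists>B. Borel_Tr B \<and> S \<subseteq> B \<and> B \<in> Istar" using B(1,2) by blast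
  qed
  show "Tr \<notin> Istar"
  proof
    assume "Tr \<in> Istar"
    then have "meager_in (tau (ord_succ ord_zero)) (Tr \<inter> A (ord_succ ord_zero))"
      using Istar_meager ord_one by blast
    moreover have "Tr \<inter> A (ord_succ ord_zero) = A (ord_succ ord_zero)" using A_sub_Tr by blast
    ultimately show False using A_nonmeager[OF ord_one(1)] by simp
  qed
  show "\<exists>F. (\<forall>B\<in>F. Borel_Tr B \<and> B \<notin> Istar)
          \<and> (\<forall>B1\<in>F. \<forall>B2\<in>F. B1 \<noteq> B2 \<longrightarrow> B1 \<inter> B2 = {})
          \<and> \<not> countable F"
  proof (intro exI[of _ "A ` (Field W - {ord_zero})"] conjI)
    show "\<forall>B\<in>A ` (Field W - {ord_zero}). Borel_Tr B \<and> B \<notin> Istar"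
    proof
      fix B assume "B \<in> A ` (Field W - {ord_zero})"
      then obtain a where a: "a \<in> Field W" "a \<noteq> ord_zero" "B = A a" by blast
      show "Borel_Tr B \<and> B \<notin> Istar" using A_Borel[OF a(1)] A_notin_Istar[OF a(1,2)] a(3) by simp
    qed
    show "\<forall>B1\<in>A ` (Field W - {ord_zero}). \<forall>B2\<in>A ` (Field W - {ord_zero}). B1 \<noteq> B2 \<longrightarrow> B1 \<inter> B2 = {}"
    proof (intro ballI impI)
      fix B1 B2 assume "B1 \<in> A ` (Field W - {ord_zero})" "B2 \<in> A ` (Field W - {ord_zero})" and ne: "B1 \<noteq> B2"
      then obtain a b where ab: "B1 = A a" "B2 = A b" by blast
      then have "a \<noteq> b" using ne by blast
      then show "B1 \<inter> B2 = {}" using A_disj ab by simp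
    qed
    have inj: "inj_on A (Field W - {ord_zero})"
    proof (rule inj_onI)
      fix a b assume ab: "a \<in> Field W - {ord_zero}" "b \<in> Field W - {ord_zero}" "A a = A b"
      show "a = b"
      proof (rule ccontr)
        assume "a \<noteq> b"
        then have "A a \<inter> A b = {}" by (rule A_disj)
        then show False using ab A_nonempty by auto
      qed
    qed
    show "\<not> countable (A ` (Field W - {ord_zero}))"
    proof
      assume "countable (A ` (Field W - {ord_zero}))"
      then have "countable (Field W - {ord_zero})" by (rule countable_image_inj_on[OF _ inj])
      then have c1: "countable (insert ord_zero (Field W - {ord_zero}))" by (rule countable_insert)
      have e: "insert ord_zero (Field W - {ord_zero}) = Field W" using ord_zero_props(1) by (rule insert_Diff)
      have "countable (Field W)" using c1 unfolding e .
      then show False by (rule notE[OF W_uncountable])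
    qed
  qed
  show "\<not> (\<exists>F. (\<forall>B\<in>F. Borel_Tr B \<and> B \<notin> Istar)
          \<and> (\<forall>B1\<in>F. \<forall>B2\<in>F. B1 \<noteq> B2 \<longrightarrow> B1 \<inter> B2 \<in> Istar)
          \<and> (cardSuc (cardSuc natLeq), card_of F) \<in> ordLeq)"
  proof
    assume "\<exists>F. (\<forall>B\<in>F. Borel_Tr B \<and> B \<notin> Istar)
          \<and> (\<forall>B1\<in>F. \<forall>B2\<in>F. B1 \<noteq> B2 \<longrightarrow> B1 \<inter> B2 \<in> Istar)
          \<and> (cardSuc (cardSuc natLeq), card_of F) \<in> ordLeq"
    then obtain F where F: "\<forall>B\<in>F. Borel_Tr B \<and> B \<notin> Istar"
        "\<forall>B1\<in>F. \<forall>B2\<in>F. B1 \<noteq> B2 \<longrightarrow> B1 \<inter> B2 \<in> Istar"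
        "(cardSuc (cardSuc natLeq), card_of F) \<in> ordLeq"
      by (elim exE conjE) (rule that)
    have F1: "\<And>B. B \<in> F \<Longrightarrow> Borel_Tr B \<and> B \<notin> Istar" using F(1) by (rule bspec)
    have F2: "\<And>B1 B2. B1 \<in> F \<Longrightarrow> B2 \<in> F \<Longrightarrow> B1 \<noteq> B2 \<Longrightarrow> B1 \<inter> B2 \<in> Istar"
      using F(2) by simp
    have F3: "cardSuc W \<le>o |F|" using F(3) .
    have ex: "\<exists>p. fst p \<in> Field W \<and> fst p \<noteq> ord_zero \<and> (fst (snd p)) \<in> A (fst p) \<and>
        openin (tau (fst p)) (snd (snd (snd p))) \<and>
        U (fst p) (fst (snd (snd p))) (fst (snd p)) \<subseteq> snd (snd (snd p)) \<and>
        meager_in (tau (fst p)) (((B \<inter> A (fst p)) - snd (snd (snd p))) \<union> (snd (snd (snd p)) - (B \<inter> A (fst p))))"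
      if B: "B \<in> F" for B
    proof -
      have Bb: "Borel_Tr B" "B \<notin> Istar" using F1[OF B] by auto
      obtain \<alpha> where a: "\<alpha> \<in> Field W" "\<alpha> \<noteq> ord_zero" "\<not> meager_in (tau \<alpha>) (B \<inter> A \<alpha>)"
      proof (rule ccontr)
        assume "\<not> thesis"
        then have "\<And>\<alpha>. \<alpha> \<in> Field W \<Longrightarrow> \<alpha> \<noteq> ord_zero \<Longrightarrow> meager_in (tau \<alpha>) (B \<inter> A \<alpha>)" using that by blast
        then have "B \<in> Istar" using IstarI[OF Bb(1) order_refl] by blast
        then show False using Bb(2) by simp
      qed
      obtain V where V: "openin (tau \<alpha>) V" "meager_in (tau \<alpha>) (((B \<inter> A \<alpha>) - V) \<union> (V - (B \<inter> A \<alpha>)))"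
        using Borel_BP[OF Bb(1), of \<alpha>] unfolding BP_def by blast
      have "V \<noteq> {}"
      proof
        assume "V = {}"
        then show False using V(2) a(3) by simp
      qed
      then obtain x where x: "x \<in> V" by blast
      have xA: "x \<in> A \<alpha>" using openin_subset[OF V(1)] x topspace_tau by blast
      obtain n where n: "U \<alpha> n x \<subseteq> V" using open_nbhd[OF V(1) x] by blast
      show ?thesis
        by (rule exI[of _ "(\<alpha>, x, n, V)"]) (use a xA V n in simp)
    qed
    obtain c where c: "\<And>B. B \<in> F \<Longrightarrow> fst (c B) \<in> Field W \<and> fst (c B) \<noteq> ord_zero \<and> (fst (snd (c B))) \<in> A (fst (c B)) \<and>
        openin (tau (fst (c B))) (snd (snd (snd (c B)))) \<and>
        U (fst (c B)) (fst (snd (snd (c B)))) (fst (snd (c B))) \<subseteq> snd (snd (snd (c B))) \<and>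
        meager_in (tau (fst (c B))) (((B \<inter> A (fst (c B))) - snd (snd (snd (c B)))) \<union> (snd (snd (snd (c B))) - (B \<inter> A (fst (c B)))))"
      using ex by metis
    define al where "al B = fst (c B)" for B
    define xx where "xx B = fst (snd (c B))" for B
    define nn where "nn B = fst (snd (snd (c B)))" for B
    define VV where "VV B = snd (snd (snd (c B)))" for B
    have cc: "al B \<in> Field W" "al B \<noteq> ord_zero" "xx B \<in> A (al B)" "openin (tau (al B)) (VV B)"
        "U (al B) (nn B) (xx B) \<subseteq> VV B"
        "meager_in (tau (al B)) (((B \<inter> A (al B)) - VV B) \<union> (VV B - (B \<inter> A (al B))))"
      if "B \<in> F" for B
      using c[OF that] unfolding al_def xx_def nn_def VV_def by blast+
    define code where "code B = (al B, U (al B) (nn B) (xx B))" for B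
    define Bas where "Bas \<alpha> = {U \<alpha> n T | n T. T \<in> A \<alpha>}" for \<alpha>
    have inj: "inj_on code F"
    proof (rule inj_onI)
      fix B1 B2 assume B: "B1 \<in> F" "B2 \<in> F" "code B1 = code B2"
      show "B1 = B2"
      proof (rule ccontr)
        assume ne: "B1 \<noteq> B2"
        define \<alpha> where "\<alpha> = al B1"
        define U0 where "U0 = U (al B1) (nn B1) (xx B1)"
        have e: "al B2 = \<alpha>" "U (al B2) (nn B2) (xx B2) = U0" using B(3) unfolding code_def \<alpha>_def U0_def by auto
        have c1: "\<alpha> \<in> Field W" "\<alpha> \<noteq> ord_zero" "xx B1 \<in> A \<alpha>" "U0 \<subseteq> VV B1"
            "meager_in (tau \<alpha>) (((B1 \<inter> A \<alpha>) - VV B1) \<union> (VV B1 - (B1 \<inter> A \<alpha>)))"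
          using cc[OF B(1)] unfolding \<alpha>_def U0_def by auto
        have c2: "U0 \<subseteq> VV B2" "meager_in (tau \<alpha>) (((B2 \<inter> A \<alpha>) - VV B2) \<union> (VV B2 - (B2 \<inter> A \<alpha>)))"
          using cc[OF B(2)] e by auto
        have m12: "meager_in (tau \<alpha>) ((B1 \<inter> B2) \<inter> A \<alpha>)"
          using Istar_meager[OF F2[OF B(1,2) ne] c1(1,2)] .
        have sub: "U0 \<subseteq> ((B1 \<inter> B2) \<inter> A \<alpha>) \<union> ((((B1 \<inter> A \<alpha>) - VV B1) \<union> (VV B1 - (B1 \<inter> A \<alpha>))) \<union>
                     (((B2 \<inter> A \<alpha>) - VV B2) \<union> (VV B2 - (B2 \<inter> A \<alpha>))))"
        proof
          fix y assume y: "y \<in> U0"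
          have yA: "y \<in> A \<alpha>" using y U_sub unfolding U0_def \<alpha>_def by blast
          have y1: "y \<in> VV B1" "y \<in> VV B2" using y c1(4) c2(1) by auto
          show "y \<in> ((B1 \<inter> B2) \<inter> A \<alpha>) \<union> ((((B1 \<inter> A \<alpha>) - VV B1) \<union> (VV B1 - (B1 \<inter> A \<alpha>))) \<union>
                     (((B2 \<inter> A \<alpha>) - VV B2) \<union> (VV B2 - (B2 \<inter> A \<alpha>))))"
            using yA y1 by blast
        qed
        have "meager_in (tau \<alpha>) U0"
          by (rule meager_subset[OF meager_Un[OF m12 meager_Un[OF c1(5) c2(2)]] sub])
        moreover have "openin (tau \<alpha>) U0" unfolding U0_def using open_U c1(3) unfolding \<alpha>_def by blast
        moreover have "U0 \<noteq> {}" unfolding U0_def using U_self c1(3) unfolding \<alpha>_def by blast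
        ultimately show False using baire_open[OF c1(1)] by blast
      qed
    qed
    have img: "code B \<in> (SIGMA \<alpha>:Field W. Bas \<alpha>)" if "B \<in> F" for B
      using cc[OF that] unfolding code_def Bas_def by blast
    have le1: "|F| \<le>o |SIGMA \<alpha>:Field W. Bas \<alpha>|" by (rule card_of_ordLeqI[OF inj img])
    have natW: "natLeq \<le>o W" by (rule ordLess_imp_ordLeq[OF cardSuc_greater[OF natLeq_Card_order]])
    have FW: "|Field W| \<le>o W" by (rule ordIso_imp_ordLeq[OF card_of_Field_ordIso[OF W_card]])
    have BW: "\<forall>\<alpha>\<in>Field W. |Bas \<alpha>| \<le>o W"
    proof
      fix \<alpha> assume "\<alpha> \<in> Field W"
      have "|Bas \<alpha>| \<le>o natLeq" unfolding Bas_def countable_card_le_natLeq[symmetric] by (rule countable_Bas)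
      then show "|Bas \<alpha>| \<le>o W" by (rule ordLeq_transitive[OF _ natW])
    qed
    have le2: "|SIGMA \<alpha>:Field W. Bas \<alpha>| \<le>o W"
      by (rule card_of_Sigma_ordLeq_infinite_Field[OF W_infinite W_card FW BW])
    have "cardSuc W \<le>o W" using ordLeq_transitive[OF F3 ordLeq_transitive[OF le1 le2]] .
    moreover have "W <o cardSuc W" by (rule cardSuc_greater[OF W_card])
    ultimately show False using not_ordLess_ordLeq by metis
  qed
qed


end
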